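(* Let $Y$ be an $\mathbb{R}^d$-valued random variable, $\pi:\mathbb{R}^d\to\mathbb{R}$ measurable, and $X$ a real-valued random variable; write $U_1(Y)=\mathbb{E}[X\mid Y]$. Assume that for some $q>2$, $\mathbb{E}[|X|^q]+\mathbb{E}[|\pi(Y)|^q]<\infty$, and that there exist $\bar\delta,\bar\rho>0$ such that $\mathbb{P}(|U_1(Y)-\pi(Y)|<x)\le\bar\rho x$ for all $x<\bar\delta$. Let $M_\ell=M_0 2^\ell$ for a fixed positive integer $M_0$. For $\ell\ge1$ let $\widehat E^{(0)}_{\ell-1}(Y)$ and $\widehat E^{(1)}_{\ell-1}(Y)$ be conditionally independent given $Y$, each being an average $M_{\ell-1}^{-1}\sum_{n=1}^{M_{\ell-1}}X^{(n)}(Y)$ of $M_{\ell-1}$ samples of $X$ that are conditionally independent given $Y$ and each have the conditional law of $X$ given $Y$. Define \[ \Delta^{\mathrm{ant}}_\ell(Y)=\max\left\{\tfrac12\big(\widehat E^{(0)}_{\ell-1}(Y)+\widehat E^{(1)}_{\ell-1}(Y)\big),\pi(Y)\right\}-\frac12\sum_{i=0}^1\max\left\{\widehat E^{(i)}_{\ell-1}(Y),\pi(Y)\right\}. \] Then there is $b_1>0$, independent of $\ell$, such that for $1\le p\le q$, \[ \mathbb{E}\left[|\Delta^{\mathrm{ant}}_\ell(Y)|^p\right]\le b_1\,2^{-q(1+p^{-1})p\ell/(2(q+1))}. \] *)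

theory Defs
  imports "HOL-Probability.Probability"
begin

definition sigma_rv :: "'a measure \<Rightarrow> ('a \<Rightarrow> 'b::topological_space) \<Rightarrow> 'a measure" where
  "sigma_rv M Y = vimage_algebra (space M) Y borel"

text \<open>The random variables Xs i (i in the finite index set I) are conditionally independent
  given Y and each has the conditional law of X given Y.\<close>
definition cond_iid_copies ::
  "'a measure \<Rightarrow> ('a \<Rightarrow> 'b::topological_space) \<Rightarrow> ('a \<Rightarrow> real) \<Rightarrow> 'i set \<Rightarrow> ('i \<Rightarrow> 'a \<Rightarrow> real) \<Rightarrow> bool" where
  "cond_iid_copies M Y X I Xs \<longleftrightarrow>
     (\<forall>i\<in>I. Xs i \<in> borel_measurable M) \<and>
     (\<forall>A \<in> sets borel. \<forall>B. (\<forall>i\<in>I. B i \<in> sets borel) \<longrightarrow>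
        measure M {\<omega> \<in> space M. Y \<omega> \<in> A \<and> (\<forall>i\<in>I. Xs i \<omega> \<in> B i)} =
        (\<integral>\<omega>. indicator A (Y \<omega>) *
              (\<Prod>i\<in>I. real_cond_exp M (sigma_rv M Y) (\<lambda>\<omega>'. indicator (B i) (X \<omega>')) \<omega>) \<partial>M))"

definition Mlev :: "nat \<Rightarrow> nat \<Rightarrow> nat" where
  "Mlev M0 l = M0 * 2 ^ l"

definition Ehat :: "nat \<Rightarrow> nat \<Rightarrow> (nat \<times> nat \<Rightarrow> 'a \<Rightarrow> real) \<Rightarrow> nat \<Rightarrow> 'a \<Rightarrow> real" where
  "Ehat M0 l Xs i \<omega> = (\<Sum>n<Mlev M0 (l - 1). Xs (i, n) \<omega>) / real (Mlev M0 (l - 1))"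

definition Delta_ant :: "nat \<Rightarrow> nat \<Rightarrow> (nat \<times> nat \<Rightarrow> 'a \<Rightarrow> real) \<Rightarrow> ('a \<Rightarrow> real) \<Rightarrow> 'a \<Rightarrow> real" where
  "Delta_ant M0 l Xs piY \<omega> =
     max ((Ehat M0 l Xs 0 \<omega> + Ehat M0 l Xs 1 \<omega>) / 2) (piY \<omega>)
     - (1/2) * (\<Sum>i\<in>{0,1::nat}. max (Ehat M0 l Xs i \<omega>) (piY \<omega>))"

end

theory Submission
  imports Defs
begin

lemma taylor_pow:
  fixes q u :: real
  assumes q: "q > 2" and u: "\<bar>u\<bar> \<le> 1/2"
  shows "(1+u) powr q \<le> 1 + q*u + q*(q-1)*2 powr q * u^2"
proof (cases "u = 0")
  case True then show ?thesis by simp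
next
  case False
  define d where "d = (\<lambda>m::nat. if m = 0 then (\<lambda>t::real. t powr q) else if m = 1 then (\<lambda>t. q * t powr (q-1))
      else (\<lambda>t. q*(q-1) * t powr (q-2)))"
  have D: "\<forall>m t. m < 2 \<and> 1/2 \<le> t \<and> t \<le> 3/2 \<longrightarrow> DERIV (d m) t :> d (Suc m) t"
  proof (intro allI impI)
    fix m :: nat and t :: real assume h: "m < 2 \<and> 1/2 \<le> t \<and> t \<le> 3/2"
    then have t: "t > 0" by auto
    show "DERIV (d m) t :> d (Suc m) t"
    proof (cases "m = 0")
      case True
      then show ?thesis using has_real_derivative_powr[OF t, of q] by (simp add: d_def)
    next
      case False
      then have "m = 1" using h by auto
      then show ?thesis using DERIV_cmult[OF has_real_derivative_powr[OF t, of "q-1"], of q] 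
        by (simp add: d_def algebra_simps)
    qed
  qed
  have "\<exists>t. (if 1+u < 1 then 1+u < t \<and> t < 1 else 1 < t \<and> t < 1+u) \<and>
    d 0 (1+u) = (\<Sum>m<2. (d m 1 / fact m) * ((1+u) - 1)^m) + (d 2 t / fact 2) * ((1+u) - 1)^2"
    by (rule Taylor[of 2 d "d 0" "1/2" "3/2" 1 "1+u", OF _ refl D]) (use u False in auto)
  then obtain t where t: "(if 1+u < 1 then 1+u < t \<and> t < 1 else 1 < t \<and> t < 1+u)"
    and eq: "d 0 (1+u) = (\<Sum>m<2. (d m 1 / fact m) * ((1+u) - 1)^m) + (d 2 t / fact 2) * ((1+u) - 1)^2"
    by blast
  have tpos: "t > 0" "t \<le> 2" using t u by (auto split: if_splits)
  have "t powr (q-2) \<le> 2 powr (q-2)" using tpos q by (intro powr_mono2) auto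
  also have "\<dots> \<le> 2 powr q" by (intro powr_mono) auto
  finally have tb: "t powr (q-2) \<le> 2 powr q" .
  have "(1+u) powr q = 1 + q*u + q*(q-1)* t powr (q-2) / 2 * u^2"
    using eq by (simp add: d_def numeral_2_eq_2 )
  also have "\<dots> \<le> 1 + q*u + q*(q-1)*2 powr q * u^2"
  proof -
    have "q*(q-1)* t powr (q-2) / 2 * u^2 \<le> q*(q-1)* 2 powr q * u^2"
    proof (rule mult_right_mono)
      have "q*(q-1)* t powr (q-2) \<le> q*(q-1)* 2 powr q" using tb q by (intro mult_left_mono) auto
      moreover have "0 \<le> q*(q-1)* t powr (q-2)" using q by auto
      ultimately show "q*(q-1)* t powr (q-2) / 2 \<le> q*(q-1)* 2 powr q" by linarith
    qed simp
    then show ?thesis by simp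
  qed
  finally show ?thesis .
qed

definition phiq :: "real \<Rightarrow> real \<Rightarrow> real" where
  "phiq q x = sgn x * \<bar>x\<bar> powr (q-1)"

definition C1q :: "real \<Rightarrow> real" where
  "C1q q = q*(q-1)*2 powr q + 3 powr q + q * 2 powr q"

lemma C1q_pos: "q > 2 \<Longrightarrow> C1q q > 0"
  unfolding C1q_def by (intro add_pos_pos) auto

lemma key_ineq:
  fixes q x y :: real
  assumes q: "q > 2"
  shows "\<bar>x+y\<bar> powr q \<le> \<bar>x\<bar> powr q + q * phiq q x * y + C1q q * (\<bar>x\<bar> powr (q-2) * y^2 + \<bar>y\<bar> powr q)"
proof (cases "\<bar>x\<bar> \<le> 2*\<bar>y\<bar>")
  case True
  show ?thesis
  proof (cases "y = 0")
    case True
    with \<open>\<bar>x\<bar> \<le> 2*\<bar>y\<bar>\<close> have "x = 0" by auto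
    with True q show ?thesis by (simp add: phiq_def)
  next
    case False
    then have yp: "\<bar>y\<bar> > 0" by auto
    have "\<bar>x+y\<bar> powr q \<le> (3*\<bar>y\<bar>) powr q"
      using True q by (intro powr_mono2) auto
    also have "\<dots> = 3 powr q * \<bar>y\<bar> powr q" by (simp add: powr_mult)
    finally have h1: "\<bar>x+y\<bar> powr q \<le> 3 powr q * \<bar>y\<bar> powr q" .
    have "\<bar>q * phiq q x * y\<bar> = q * \<bar>x\<bar> powr (q-1) * \<bar>y\<bar>"
      using q by (auto simp: phiq_def abs_mult abs_sgn_eq)
    also have "\<dots> \<le> q * (2*\<bar>y\<bar>) powr (q-1) * \<bar>y\<bar>"
      using True q by (intro mult_right_mono mult_left_mono powr_mono2) auto
    also have "\<dots> = q * 2 powr (q-1) * (\<bar>y\<bar> powr (q-1) * \<bar>y\<bar>)" by (simp add: powr_mult)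
    also have "\<bar>y\<bar> powr (q-1) * \<bar>y\<bar> = \<bar>y\<bar> powr q"
      using yp by (simp add: powr_diff)
    also have "q * 2 powr (q-1) * \<bar>y\<bar> powr q \<le> q * 2 powr q * \<bar>y\<bar> powr q"
      using q by (intro mult_right_mono mult_left_mono powr_mono) auto
    finally have h2: "\<bar>q * phiq q x * y\<bar> \<le> q * 2 powr q * \<bar>y\<bar> powr q" .
    have h3: "0 \<le> q*(q-1)*2 powr q * (\<bar>x\<bar> powr (q-2) * y^2 + \<bar>y\<bar> powr q)" using q by auto
    have h4: "C1q q * (\<bar>x\<bar> powr (q-2) * y^2 + \<bar>y\<bar> powr q) = 
        q*(q-1)*2 powr q * (\<bar>x\<bar> powr (q-2) * y^2 + \<bar>y\<bar> powr q) + 3 powr q * \<bar>x\<bar> powr (q-2) * y^2 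
        + q * 2 powr q * \<bar>x\<bar> powr (q-2) * y^2 + 3 powr q * \<bar>y\<bar> powr q + q * 2 powr q * \<bar>y\<bar> powr q"
      by (simp add: C1q_def algebra_simps)
    have h5: "0 \<le> 3 powr q * \<bar>x\<bar> powr (q-2) * y^2 + q * 2 powr q * \<bar>x\<bar> powr (q-2) * y^2"
      using q by auto
    have h6: "0 \<le> \<bar>x\<bar> powr q" by simp
    show ?thesis using h1 h2 h3 h4 h5 h6 by (smt (verit, best))
  qed
next
  case False
  then have xp: "\<bar>x\<bar> > 0" by auto
  define u where "u = y / x"
  have u: "\<bar>u\<bar> \<le> 1/2" using False xp by (auto simp: u_def abs_divide field_simps)
  have yx: "y = x * u" using xp by (auto simp: u_def)
  have "\<bar>x+y\<bar> = \<bar>x\<bar> * (1+u)" proof -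
    have "x + y = x * (1+u)" by (simp add: yx algebra_simps)
    then show ?thesis using u by (simp add: abs_mult)
  qed
  then have "\<bar>x+y\<bar> powr q = \<bar>x\<bar> powr q * (1+u) powr q" by (simp add: powr_mult)
  also have "\<dots> \<le> \<bar>x\<bar> powr q * (1 + q*u + q*(q-1)*2 powr q * u^2)"
    by (intro mult_left_mono taylor_pow q u) simp
  also have "\<dots> = \<bar>x\<bar> powr q + q * (\<bar>x\<bar> powr q * u) + q*(q-1)*2 powr q * (\<bar>x\<bar> powr q * u^2)"
    by (simp add: algebra_simps)
  also have "\<bar>x\<bar> powr q * u = phiq q x * y"
  proof -
    have "\<bar>x\<bar> powr q = \<bar>x\<bar> powr (q-1) * \<bar>x\<bar>" using xp by (simp add: powr_diff)
    then show ?thesis using xp unfolding phiq_def u_def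
      by (cases "x > 0") (auto simp: field_simps)
  qed
  also have "\<bar>x\<bar> powr q * u^2 = \<bar>x\<bar> powr (q-2) * y^2"
  proof -
    have "\<bar>x\<bar> powr q = \<bar>x\<bar> powr (q-2) * \<bar>x\<bar>^2" using xp by (simp add: powr_diff)
    then show ?thesis using xp unfolding u_def by (simp add: field_simps power2_eq_square)
  qed
  finally have h: "\<bar>x+y\<bar> powr q \<le> \<bar>x\<bar> powr q + q * (phiq q x * y) + q*(q-1)*2 powr q * (\<bar>x\<bar> powr (q-2) * y^2)" .
  have "q*(q-1)*2 powr q * (\<bar>x\<bar> powr (q-2) * y^2) \<le> C1q q * (\<bar>x\<bar> powr (q-2) * y^2 + \<bar>y\<bar> powr q)"
  proof -
    have "q*(q-1)*2 powr q \<le> C1q q" unfolding C1q_def using q by auto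
    then have "q*(q-1)*2 powr q * (\<bar>x\<bar> powr (q-2) * y^2) \<le> C1q q * (\<bar>x\<bar> powr (q-2) * y^2)"
      by (intro mult_right_mono) auto
    also have "\<dots> \<le> C1q q * (\<bar>x\<bar> powr (q-2) * y^2 + \<bar>y\<bar> powr q)"
      using C1q_pos[OF q] by (intro mult_left_mono) auto
    finally show ?thesis .
  qed
  then show ?thesis using h by (simp add: mult.assoc)
qed

lemma young_q:
  fixes q x y e :: real
  assumes q: "q > 2" and e: "e > 0"
  shows "\<bar>x\<bar> powr (q-2) * y^2 \<le> e * \<bar>x\<bar> powr q + e powr (-(q-2)/2) * \<bar>y\<bar> powr q"
proof (cases "x = 0 \<or> y = 0")
  case True
  then show ?thesis using q e by auto
next
  case False
  then have xp: "\<bar>x\<bar> > 0" and yp: "\<bar>y\<bar> > 0" by auto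
  define a where "a = e * \<bar>x\<bar> powr q"
  define b where "b = e powr (-(q-2)/2) * \<bar>y\<bar> powr q"
  have ap: "a > 0" and bp: "b > 0" using xp yp e by (auto simp: a_def b_def)
  have "a powr ((q-2)/q) * b powr (2/q) \<le> ((q-2)/q)*a + (2/q)*b"
    using q ap bp by (intro Youngs_inequality_0) (auto simp: field_simps)
  also have "\<dots> \<le> a + b"
  proof -
    have "((q-2)/q)*a \<le> a" using q ap by (auto simp: field_simps)
    moreover have "(2/q)*b \<le> b" using q bp by (auto simp: field_simps)
    ultimately show ?thesis by linarith
  qed
  also have "a powr ((q-2)/q) * b powr (2/q) = \<bar>x\<bar> powr (q-2) * y^2"
  proof -
    have "a powr ((q-2)/q) = e powr ((q-2)/q) * \<bar>x\<bar> powr (q-2)"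
      unfolding a_def using q e xp by (simp add: powr_mult powr_powr)
    moreover have "b powr (2/q) = e powr (-(q-2)/q) * \<bar>y\<bar> powr 2"
    proof -
      have "(-(q-2)/2) * (2/q) = -(q-2)/q" using q by (simp add: field_simps)
      then show ?thesis unfolding b_def using q e yp by (simp add: powr_mult powr_powr)
    qed
    moreover have "e powr ((q-2)/q) * e powr (-(q-2)/q) = 1"
    proof -
      have "(q - 2) / q + (2 - q) / q = 0" by (simp add: add_divide_distrib[symmetric])
      then show ?thesis using e by (simp add: powr_add[symmetric])
    qed
    moreover have "\<bar>y\<bar> powr 2 = y^2" using yp by (simp add: powr_numeral)
    ultimately show ?thesis by (simp add: algebra_simps)
  qed
  finally show ?thesis by (simp add: a_def b_def)
qed

lemma bern_powr:
  fixes n r :: real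
  assumes n: "n \<ge> 1" and r: "r \<ge> 1"
  shows "n powr r + r * n powr (r-1) \<le> (n+1) powr r"
proof -
  have "\<forall>x. n \<le> x \<and> x \<le> n+1 \<longrightarrow> DERIV (\<lambda>x. x powr r) x :> r * x powr (r-1)"
    using n by (auto intro!: has_real_derivative_powr)
  then obtain z where z: "n < z" "z < n+1" "(n+1) powr r - n powr r = ((n+1) - n) * (r * z powr (r-1))"
    using MVT2[of n "n+1" "\<lambda>x. x powr r" "\<lambda>x. r * x powr (r-1)"] by auto
  have "n powr (r-1) \<le> z powr (r-1)" using z n r by (intro powr_mono2) auto
  then have "r * n powr (r-1) \<le> r * z powr (r-1)" using r by auto
  then show ?thesis using z by simp
qed

lemma pow_mix_bound:
  fixes a b q :: real
  assumes "a \<ge> 0" "b \<ge> 0" "q > 2"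
  shows "a powr (q-1) * b \<le> a powr q + b powr q"
proof (cases "a \<le> b")
  case True
  show ?thesis
  proof (cases "b = 0")
    case True then show ?thesis using assms by auto
  next
    case False
    have "a powr (q-1) * b \<le> b powr (q-1) * b"
      using True assms by (intro mult_right_mono powr_mono2) auto
    also have "\<dots> = b powr q" using False assms by (simp add: powr_diff)
    finally show ?thesis using assms by (smt (verit) powr_ge_zero)
  qed
next
  case False
  then have ap: "a > 0" using assms by auto
  have "a powr (q-1) * b \<le> a powr (q-1) * a"
    using False assms by (intro mult_left_mono) auto
  also have "\<dots> = a powr q" using ap by (simp add: powr_diff)
  finally show ?thesis using assms by (smt (verit) powr_ge_zero)
qed

lemma pow_sum_bound:
  fixes a b q :: real
  assumes "q > 0"
  shows "\<bar>a + b\<bar> powr q \<le> 2 powr q * (\<bar>a\<bar> powr q + \<bar>b\<bar> powr q)"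
proof -
  have "\<bar>a + b\<bar> \<le> 2 * max \<bar>a\<bar> \<bar>b\<bar>" by auto
  then have "\<bar>a + b\<bar> powr q \<le> (2 * max \<bar>a\<bar> \<bar>b\<bar>) powr q"
    using assms by (intro powr_mono2) auto
  also have "\<dots> = 2 powr q * (max \<bar>a\<bar> \<bar>b\<bar>) powr q" by (simp add: powr_mult)
  also have "(max \<bar>a\<bar> \<bar>b\<bar>) powr q \<le> \<bar>a\<bar> powr q + \<bar>b\<bar> powr q"
    by (cases "\<bar>a\<bar> \<le> \<bar>b\<bar>") (auto simp: max_def)
  finally show ?thesis by simp
qed

lemma integrable_powr_add:
  fixes f g :: "'a \<Rightarrow> real"
  assumes q: "q > 0" and [measurable]: "f \<in> borel_measurable M" "g \<in> borel_measurable M"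
    and "integrable M (\<lambda>x. \<bar>f x\<bar> powr q)" "integrable M (\<lambda>x. \<bar>g x\<bar> powr q)"
  shows "integrable M (\<lambda>x. \<bar>f x + g x\<bar> powr q)"
proof (rule Bochner_Integration.integrable_bound[where f="\<lambda>x. 2 powr q * (\<bar>f x\<bar> powr q + \<bar>g x\<bar> powr q)"])
  show "integrable M (\<lambda>x. 2 powr q * (\<bar>f x\<bar> powr q + \<bar>g x\<bar> powr q))"
    using assms by auto
  show "AE x in M. norm (\<bar>f x + g x\<bar> powr q) \<le> norm (2 powr q * (\<bar>f x\<bar> powr q + \<bar>g x\<bar> powr q))"
    using pow_sum_bound[OF q] by (auto intro!: AE_I2)
qed measurable

lemma integrable_phiq_mult:
  fixes f g :: "'a \<Rightarrow> real"
  assumes q: "q > 2" and [measurable]: "f \<in> borel_measurable M" "g \<in> borel_measurable M"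
    and "integrable M (\<lambda>x. \<bar>f x\<bar> powr q)" "integrable M (\<lambda>x. \<bar>g x\<bar> powr q)"
  shows "integrable M (\<lambda>x. phiq q (f x) * g x)"
proof (rule Bochner_Integration.integrable_bound[where f="\<lambda>x. \<bar>f x\<bar> powr q + \<bar>g x\<bar> powr q"])
  show "integrable M (\<lambda>x. \<bar>f x\<bar> powr q + \<bar>g x\<bar> powr q)"
    using assms by auto
  show "AE x in M. norm (phiq q (f x) * g x) \<le> norm (\<bar>f x\<bar> powr q + \<bar>g x\<bar> powr q)"
  proof (intro AE_I2)
    fix x
    have "norm (phiq q (f x) * g x) = \<bar>f x\<bar> powr (q-1) * \<bar>g x\<bar>"
      by (cases "f x = 0") (auto simp: phiq_def abs_mult abs_sgn_eq)
    also have "\<dots> \<le> \<bar>f x\<bar> powr q + \<bar>g x\<bar> powr q"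
      using pow_mix_bound q by auto
    finally show "norm (phiq q (f x) * g x) \<le> norm (\<bar>f x\<bar> powr q + \<bar>g x\<bar> powr q)" by simp
  qed
qed (simp add: phiq_def)

definition Kq :: "real \<Rightarrow> real" where
  "Kq q = max 1 (4 * (C1q q * (1 + (q / (4 * C1q q)) powr (-(q-2)/2))) / q)"

lemma moment_bound:
  fixes Z :: "nat \<Rightarrow> 'a \<Rightarrow> real" and q m :: real
  assumes M: "prob_space M" and q: "q > 2"
    and Zm[measurable]: "\<And>k. k < N \<Longrightarrow> Z k \<in> borel_measurable M"
    and Zi: "\<And>k. k < N \<Longrightarrow> integrable M (\<lambda>x. \<bar>Z k x\<bar> powr q)"
    and Zb: "\<And>k. k < N \<Longrightarrow> (\<integral>x. \<bar>Z k x\<bar> powr q \<partial>M) \<le> m"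
    and orth: "\<And>n. n < N \<Longrightarrow> (\<integral>x. phiq q (\<Sum>k<n. Z k x) * Z n x \<partial>M) = 0"
  shows "integrable M (\<lambda>x. \<bar>\<Sum>k<N. Z k x\<bar> powr q) \<and>
         (\<integral>x. \<bar>\<Sum>k<N. Z k x\<bar> powr q \<partial>M) \<le> Kq q * m * real N powr (q/2)"
proof -
  interpret prob_space M by fact
  define C1 where "C1 = C1q q"
  have C1: "C1 > 0" using C1q_pos[OF q] by (simp add: C1_def)
  define c where "c = q / (4 * C1)"
  have c: "c > 0" using C1 q by (simp add: c_def)
  define C2 where "C2 = C1 * (1 + c powr (-(q-2)/2))"
  define K where "K = Kq q"
  have K1: "K \<ge> 1" "4 * C2 / q \<le> K" unfolding K_def Kq_def C2_def c_def C1_def by auto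
  have K: "K \<ge> 1" "C2 \<le> q * K / 4" using K1 q by (auto simp: field_simps)
  define S where "S = (\<lambda>n x. \<Sum>k<n. Z k x)"
  have Sm[measurable]: "S n \<in> borel_measurable M" if "n \<le> N" for n
    using that unfolding S_def by (auto intro!: borel_measurable_sum Zm)
  have main: "n \<le> N \<longrightarrow> integrable M (\<lambda>x. \<bar>S n x\<bar> powr q) \<and>
      (1 \<le> n \<longrightarrow> (\<integral>x. \<bar>S n x\<bar> powr q \<partial>M) \<le> K * m * real n powr (q/2))" for n
  proof (induction n)
    case 0
    show ?case by (simp add: S_def)
  next
    case (Suc n)
    show ?case
    proof
      assume nN: "Suc n \<le> N"
      then have nN': "n < N" by simp
      have IH1: "integrable M (\<lambda>x. \<bar>S n x\<bar> powr q)" using Suc nN by auto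
      have Sn: "S (Suc n) x = S n x + Z n x" for x by (simp add: S_def)
      have int1: "integrable M (\<lambda>x. \<bar>S (Suc n) x\<bar> powr q)"
        unfolding Sn using q nN' IH1 Zi[OF nN'] Sm[of n]
        by (intro integrable_powr_add) auto
      have mnn: "m \<ge> 0"
      proof -
        have "0 \<le> (\<integral>x. \<bar>Z n x\<bar> powr q \<partial>M)" by (intro integral_nonneg_AE) auto
        then show ?thesis using Zb[OF nN'] by linarith
      qed
      have bound: "(\<integral>x. \<bar>S (Suc n) x\<bar> powr q \<partial>M) \<le> K * m * real (Suc n) powr (q/2)"
      proof (cases "n = 0")
        case True
        have "(\<integral>x. \<bar>S (Suc n) x\<bar> powr q \<partial>M) = (\<integral>x. \<bar>Z 0 x\<bar> powr q \<partial>M)"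
          using True by (simp add: S_def)
        also have "\<dots> \<le> m" using Zb nN True by auto
        also have "\<dots> \<le> K * m * real (Suc n) powr (q/2)" using True K mnn mult_right_mono[of 1 K m] by auto
        finally show ?thesis .
      next
        case False
        then have n1: "real n \<ge> 1" by simp
        have IH2: "(\<integral>x. \<bar>S n x\<bar> powr q \<partial>M) \<le> K * m * real n powr (q/2)"
          using Suc nN False by auto
        define e where "e = c / real n"
        have e: "e > 0" using c n1 by (simp add: e_def)
        have pw: "\<bar>S n x + Z n x\<bar> powr q \<le> \<bar>S n x\<bar> powr q + q * (phiq q (S n x) * Z n x)
              + C1 * e * \<bar>S n x\<bar> powr q + C1 * (e powr (-(q-2)/2) + 1) * \<bar>Z n x\<bar> powr q" for x
        proof -
          have "\<bar>S n x + Z n x\<bar> powr q \<le> \<bar>S n x\<bar> powr q + q * phiq q (S n x) * Z n x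
              + C1 * (\<bar>S n x\<bar> powr (q-2) * (Z n x)^2 + \<bar>Z n x\<bar> powr q)"
            using key_ineq[OF q] by (simp add: C1_def)
          also have "C1 * (\<bar>S n x\<bar> powr (q-2) * (Z n x)^2 + \<bar>Z n x\<bar> powr q) \<le>
              C1 * (e * \<bar>S n x\<bar> powr q + e powr (-(q-2)/2) * \<bar>Z n x\<bar> powr q + \<bar>Z n x\<bar> powr q)"
            using young_q[OF q e, of "S n x" "Z n x"] C1 by (intro mult_left_mono) auto
          finally show ?thesis by (simp add: algebra_simps)
        qed
        have iphi: "integrable M (\<lambda>x. phiq q (S n x) * Z n x)"
          using q IH1 Zi[OF nN'] Sm[of n] nN' by (intro integrable_phiq_mult) auto
        have "(\<integral>x. \<bar>S (Suc n) x\<bar> powr q \<partial>M) \<le> (\<integral>x. \<bar>S n x\<bar> powr q + q * (phiq q (S n x) * Z n x)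
              + C1 * e * \<bar>S n x\<bar> powr q + C1 * (e powr (-(q-2)/2) + 1) * \<bar>Z n x\<bar> powr q \<partial>M)"
          unfolding Sn using pw int1 IH1 iphi Zi[OF nN'] unfolding Sn
          by (intro integral_mono) auto
        also have "\<dots> = (\<integral>x. \<bar>S n x\<bar> powr q \<partial>M) + q * (\<integral>x. phiq q (S n x) * Z n x \<partial>M)
              + C1 * e * (\<integral>x. \<bar>S n x\<bar> powr q \<partial>M) + C1 * (e powr (-(q-2)/2) + 1) * (\<integral>x. \<bar>Z n x\<bar> powr q \<partial>M)"
          using IH1 iphi Zi[OF nN'] by simp
        also have "(\<integral>x. phiq q (S n x) * Z n x \<partial>M) = 0" using orth[OF nN'] by (simp add: S_def)
        finally have rec: "(\<integral>x. \<bar>S (Suc n) x\<bar> powr q \<partial>M) \<le> (1 + C1 * e) * (\<integral>x. \<bar>S n x\<bar> powr q \<partial>M)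
              + C1 * (e powr (-(q-2)/2) + 1) * m"
        proof -
          assume h: "(\<integral>x. \<bar>S (Suc n) x\<bar> powr q \<partial>M) \<le> (\<integral>x. \<bar>S n x\<bar> powr q \<partial>M) + q * 0
              + C1 * e * (\<integral>x. \<bar>S n x\<bar> powr q \<partial>M) + C1 * (e powr (-(q-2)/2) + 1) * (\<integral>x. \<bar>Z n x\<bar> powr q \<partial>M)"
          have "C1 * (e powr (-(q-2)/2) + 1) * (\<integral>x. \<bar>Z n x\<bar> powr q \<partial>M) \<le> C1 * (e powr (-(q-2)/2) + 1) * m"
            using Zb[OF nN'] C1 by (intro mult_left_mono) auto
          then show ?thesis using h by (simp add: algebra_simps)
        qed
        define P where "P = real n powr (q/2-1)"
        have P1: "1 \<le> P" unfolding P_def using n1 q by (simp add: ge_one_powr_ge_zero)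
        have nP: "real n powr (q/2) = real n * P" unfolding P_def using n1
          by (simp add: powr_diff[symmetric] powr_add[symmetric] powr_mult_base)
        have e1: "C1 * c = q/4" using C1 by (simp add: c_def)
        have e2: "C1 * e = (C1 * c) / real n" by (simp add: e_def)
        have f1: "C1 * e = (q/4) / real n" by (simp only: e1 e2)
        have f3: "e powr (-(q-2)/2) = c powr (-(q-2)/2) * P"
        proof -
          have "e powr (-(q-2)/2) = c powr (-(q-2)/2) * (inverse (real n)) powr (-(q-2)/2)"
          proof -
            have ee: "e = c * inverse (real n)" by (simp add: e_def divide_inverse)
            show ?thesis unfolding ee by (rule powr_mult)
          qed
          also have "(inverse (real n)) powr (-(q-2)/2) = P"
          proof -
            have "(inverse (real n)) powr (-(q-2)/2) = real n powr (- (-(q-2)/2))"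
              using n1 by (simp add: powr_def ln_inverse)
            also have "- (-(q-2)/2) = q/2-1" by (simp add: field_simps)
            finally show ?thesis unfolding P_def .
          qed
          finally show ?thesis .
        qed
        have f5: "real n powr (q/2) + (q/2) * P \<le> real (Suc n) powr (q/2)"
          using bern_powr[OF n1, of "q/2"] q by (simp add: P_def add.commute)
        have Kmn: "0 \<le> K * m" using K mnn by auto
        have "(1 + C1 * e) * (\<integral>x. \<bar>S n x\<bar> powr q \<partial>M) \<le> (1 + C1 * e) * (K * m * real n powr (q/2))"
          using IH2 C1 e by (intro mult_left_mono) auto
        also have "\<dots> = K * m * real n * P + (q/4) * (K * m) * P"
        proof -
          have "(q/4) / real n * real n = q/4" using n1 by simp
          moreover have "((q/4) / real n) * (K * m * (real n * P)) = ((q/4) / real n * real n) * (K * m * P)"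
            by (simp only: ac_simps)
          ultimately have "((q/4) / real n) * (K * m * (real n * P)) = (q/4) * (K * m) * P"
            by (simp only: ac_simps)
          then show ?thesis unfolding f1 nP by (simp add: distrib_right)
        qed
        finally have g1: "(1 + C1 * e) * (\<integral>x. \<bar>S n x\<bar> powr q \<partial>M) \<le> K * m * real n * P + (q/4) * (K * m) * P" .
        have "C1 * (e powr (-(q-2)/2) + 1) * m \<le> C1 * (c powr (-(q-2)/2) * P + P) * m"
          unfolding f3 using P1 C1 mnn by (intro mult_right_mono mult_left_mono) auto
        also have "\<dots> = C2 * P * m" by (simp add: C2_def algebra_simps)
        also have "\<dots> \<le> (q * K / 4) * P * m" using K P1 mnn by (intro mult_right_mono) auto
        finally have g2: "C1 * (e powr (-(q-2)/2) + 1) * m \<le> (q/4) * (K * m) * P" by (simp add: algebra_simps)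
        have "(\<integral>x. \<bar>S (Suc n) x\<bar> powr q \<partial>M) \<le> K * m * (real n * P + (q/2) * P)"
        proof -
          have "K * m * real n * P + (q/4) * (K * m) * P + (q/4) * (K * m) * P = K * m * (real n * P + (q/2) * P)"
            by (simp add: algebra_simps)
          then show ?thesis using rec g1 g2 by linarith
        qed
        also have "\<dots> \<le> K * m * real (Suc n) powr (q/2)"
          using f5 Kmn unfolding nP by (intro mult_left_mono) auto
        finally show ?thesis .
      qed
      show "integrable M (\<lambda>x. \<bar>S (Suc n) x\<bar> powr q) \<and>
        (1 \<le> Suc n \<longrightarrow> (\<integral>x. \<bar>S (Suc n) x\<bar> powr q \<partial>M) \<le> K * m * real (Suc n) powr (q/2))"
        using int1 bound by auto
    qed
  qed
  show ?thesis
  proof (cases "N = 0")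
    case True then show ?thesis by simp
  next
    case False
    then show ?thesis using main[of N] by (simp add: S_def K_def)
  qed
qed

locale cond_setup =
  fixes M :: "'a measure" and Y :: "'a \<Rightarrow> 'b::topological_space" and X :: "'a \<Rightarrow> real"
    and I :: "'i set" and Xs :: "'i \<Rightarrow> 'a \<Rightarrow> real"
  assumes M: "prob_space M"
    and Ym[measurable]: "Y \<in> borel_measurable M" and Xm[measurable]: "X \<in> borel_measurable M"
    and Xi: "integrable M X"
    and finI: "finite I"
    and cid: "cond_iid_copies M Y X I Xs"
begin

interpretation prob_space M by (rule M)

abbreviation "F \<equiv> sigma_rv M Y"

definition kap :: "real set \<Rightarrow> 'a \<Rightarrow> real" where
  "kap B = real_cond_exp M F (\<lambda>\<omega>'. indicator B (X \<omega>'))"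

abbreviation "U \<equiv> real_cond_exp M F X"

lemma Xsm[measurable]: "j \<in> I \<Longrightarrow> Xs j \<in> borel_measurable M"
  using cid unfolding cond_iid_copies_def by auto

lemma space_F: "space F = space M"
  unfolding sigma_rv_def by simp

lemma sets_F: "sets F = {Y -` A \<inter> space M | A. A \<in> sets borel}"
  unfolding sigma_rv_def by (rule sets_vimage_algebra2) (use measurable_space[OF Ym] in auto)

lemma subalg_F: "subalgebra M F"
  unfolding subalgebra_def using space_F sets_F by auto

lemma sfs_F: "sigma_finite_subalgebra M F"
  by (rule finite_measure_subalgebra_is_sigma_finite)
     (simp add: finite_measure_subalgebra_def finite_measure_subalgebra_axioms_def subalg_F finite_measure_axioms)

interpretation SF: sigma_finite_subalgebra M F by (rule sfs_F)

lemma Y_F[measurable]: "Y \<in> measurable F borel"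
  unfolding sigma_rv_def by (rule measurable_vimage_algebra1) (use measurable_space[OF Ym] in auto)

lemma kap_F[measurable]: "kap B \<in> borel_measurable F"
  unfolding kap_def by simp

lemma kap_M[measurable]: "kap B \<in> borel_measurable M"
  unfolding kap_def by simp

lemma kap_01: assumes [measurable]: "B \<in> sets borel" shows "AE \<omega> in M. 0 \<le> kap B \<omega> \<and> kap B \<omega> \<le> 1"
proof -
  have i: "integrable M (\<lambda>\<omega>'. indicator B (X \<omega>') :: real)"
    by (intro integrable_const_bound[where B=1]) auto
  have "AE \<omega> in M. 0 \<le> kap B \<omega>" unfolding kap_def
    by (rule SF.real_cond_exp_ge_c[OF i]) auto
  moreover have "AE \<omega> in M. kap B \<omega> \<le> 1" unfolding kap_def
    by (rule SF.real_cond_exp_le_c[OF i]) auto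
  ultimately show ?thesis by auto
qed

lemma kap_UNIV: "AE \<omega> in M. kap UNIV \<omega> = 1"
proof -
  have "AE \<omega> in M. real_cond_exp M F (\<lambda>_. 1) \<omega> = 1"
    by (rule SF.real_cond_exp_F_meas) auto
  then show ?thesis unfolding kap_def by simp
qed

lemma prod_kap_01:
  assumes "finite J" "\<And>j. j \<in> J \<Longrightarrow> B j \<in> sets borel"
  shows "AE \<omega> in M. 0 \<le> (\<Prod>j\<in>J. kap (B j) \<omega>) \<and> (\<Prod>j\<in>J. kap (B j) \<omega>) \<le> 1"
proof -
  have "AE \<omega> in M. \<forall>j\<in>J. 0 \<le> kap (B j) \<omega> \<and> kap (B j) \<omega> \<le> 1"
    using assms by (intro AE_finite_allI kap_01) auto
  then show ?thesis
    by eventually_elim (auto intro: prod_nonneg prod_le_1)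
qed

lemma L0:
  assumes J: "J \<subseteq> I" and B: "\<And>j. j \<in> J \<Longrightarrow> B j \<in> sets borel" and A: "A \<in> sets borel"
  shows "measure M {\<omega> \<in> space M. Y \<omega> \<in> A \<and> (\<forall>j\<in>J. Xs j \<omega> \<in> B j)} =
         (\<integral>\<omega>. indicator A (Y \<omega>) * (\<Prod>j\<in>J. kap (B j) \<omega>) \<partial>M)"
proof -
  define B' where "B' = (\<lambda>j. if j \<in> J then B j else UNIV)"
  have B': "\<forall>j\<in>I. B' j \<in> sets borel" using B by (auto simp: B'_def)
  have "measure M {\<omega> \<in> space M. Y \<omega> \<in> A \<and> (\<forall>j\<in>I. Xs j \<omega> \<in> B' j)} =
        (\<integral>\<omega>. indicator A (Y \<omega>) * (\<Prod>j\<in>I. kap (B' j) \<omega>) \<partial>M)"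
    using cid A B' unfolding cond_iid_copies_def kap_def by blast
  moreover have "{\<omega> \<in> space M. Y \<omega> \<in> A \<and> (\<forall>j\<in>I. Xs j \<omega> \<in> B' j)} = 
      {\<omega> \<in> space M. Y \<omega> \<in> A \<and> (\<forall>j\<in>J. Xs j \<omega> \<in> B j)}"
    using J by (auto simp: B'_def)
  moreover have "(\<integral>\<omega>. indicator A (Y \<omega>) * (\<Prod>j\<in>I. kap (B' j) \<omega>) \<partial>M) = 
      (\<integral>\<omega>. indicator A (Y \<omega>) * (\<Prod>j\<in>J. kap (B j) \<omega>) \<partial>M)"
  proof (rule integral_cong_AE)
    have "AE \<omega> in M. \<forall>j\<in>I - J. kap UNIV \<omega> = 1"
      using finI kap_UNIV by (intro AE_finite_allI) auto
    then show "AE \<omega> in M. indicator A (Y \<omega>) * (\<Prod>j\<in>I. kap (B' j) \<omega>) = indicator A (Y \<omega>) * (\<Prod>j\<in>J. kap (B j) \<omega>)"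
    proof eventually_elim
      case (elim \<omega>)
      have "(\<Prod>j\<in>I. kap (B' j) \<omega>) = (\<Prod>j\<in>J. kap (B' j) \<omega>) * (\<Prod>j\<in>I - J. kap (B' j) \<omega>)"
        using finI J by (metis mult.commute prod.subset_diff)
      also have "(\<Prod>j\<in>I - J. kap (B' j) \<omega>) = 1" using elim by (intro prod.neutral) (auto simp: B'_def)
      also have "(\<Prod>j\<in>J. kap (B' j) \<omega>) = (\<Prod>j\<in>J. kap (B j) \<omega>)" by (auto simp: B'_def)
      finally show ?case by simp
    qed
  qed (use A in auto)
  ultimately show ?thesis by simp
qed

lemma L1:
  assumes J: "J \<subseteq> I" and B: "\<And>j. j \<in> J \<Longrightarrow> B j \<in> sets borel"
  shows "AE \<omega> in M. real_cond_exp M F (indicator {\<omega> \<in> space M. \<forall>j\<in>J. Xs j \<omega> \<in> B j}) \<omega> = (\<Prod>j\<in>J. kap (B j) \<omega>)"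
proof (rule SF.real_cond_exp_charact)
  have finJ: "finite J" using J finI by (rule finite_subset)
  have JI: "\<And>j. j \<in> J \<Longrightarrow> j \<in> I" using J by auto
  have XJ[measurable]: "\<And>j. j\<in>J \<Longrightarrow> Xs j \<in> borel_measurable M" using JI Xsm by auto
  have BJ[measurable]: "\<And>j. j\<in>J \<Longrightarrow> B j \<in> sets borel" by (rule B)
  have Sm[measurable]: "{\<omega> \<in> space M. \<forall>j\<in>J. Xs j \<omega> \<in> B j} \<in> sets M"
    using finJ by measurable
  show "integrable M (indicator {\<omega> \<in> space M. \<forall>j\<in>J. Xs j \<omega> \<in> B j} :: _ \<Rightarrow> real)"
    by (intro integrable_const_bound[where B=1]) auto
  show gF: "(\<lambda>\<omega>. \<Prod>j\<in>J. kap (B j) \<omega>) \<in> borel_measurable F" by measurable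
  show "integrable M (\<lambda>\<omega>. \<Prod>j\<in>J. kap (B j) \<omega>)"
  proof (rule integrable_const_bound[where B=1])
    show "AE x in M. norm (\<Prod>j\<in>J. kap (B j) x) \<le> 1"
    proof -
      have "AE \<omega> in M. 0 \<le> (\<Prod>j\<in>J. kap (B j) \<omega>) \<and> (\<Prod>j\<in>J. kap (B j) \<omega>) \<le> 1"
        using finJ B by (rule prod_kap_01)
      then show ?thesis by eventually_elim auto
    qed
  qed measurable
  fix A assume "A \<in> sets F"
  then obtain A' where A': "A' \<in> sets borel" "A = Y -` A' \<inter> space M" using sets_F by auto
  have "(\<integral>x\<in>A. indicator {\<omega> \<in> space M. \<forall>j\<in>J. Xs j \<omega> \<in> B j} x \<partial>M) = 
      measure M {\<omega> \<in> space M. Y \<omega> \<in> A' \<and> (\<forall>j\<in>J. Xs j \<omega> \<in> B j)}"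
  proof -
    have "(\<integral>x\<in>A. indicator {\<omega> \<in> space M. \<forall>j\<in>J. Xs j \<omega> \<in> B j} x \<partial>M) =
        (\<integral>x. indicator {\<omega> \<in> space M. Y \<omega> \<in> A' \<and> (\<forall>j\<in>J. Xs j \<omega> \<in> B j)} x \<partial>M)"
      unfolding set_lebesgue_integral_def A'(2)
      by (intro Bochner_Integration.integral_cong) (auto simp: indicator_def)
    also have "\<dots> = measure M {\<omega> \<in> space M. Y \<omega> \<in> A' \<and> (\<forall>j\<in>J. Xs j \<omega> \<in> B j)}"
      by (subst Bochner_Integration.integral_indicator) (auto intro!: arg_cong[where f="measure M"])
    finally show ?thesis .
  qed
  also have "\<dots> = (\<integral>\<omega>. indicator A' (Y \<omega>) * (\<Prod>j\<in>J. kap (B j) \<omega>) \<partial>M)"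
    by (rule L0[OF J B A'(1)])
  also have "\<dots> = (\<integral>x\<in>A. (\<Prod>j\<in>J. kap (B j) x) \<partial>M)"
    unfolding set_lebesgue_integral_def A'(2)
    by (intro Bochner_Integration.integral_cong) (auto simp: indicator_def)
  finally show "(\<integral>x\<in>A. indicator {\<omega> \<in> space M. \<forall>j\<in>J. Xs j \<omega> \<in> B j} x \<partial>M) = (\<integral>x\<in>A. (\<Prod>j\<in>J. kap (B j) x) \<partial>M)" .
qed

end

lemma integrable_ind_comp:
  fixes f :: "'a \<Rightarrow> real"
  assumes "integrable M f" and [measurable]: "T \<in> measurable M N" "C \<in> sets N"
  shows "integrable M (\<lambda>x. indicator C (T x) * f x)"
proof (rule Bochner_Integration.integrable_bound[where f=f])
  show "integrable M f" by fact
  show "(\<lambda>x. indicator C (T x) * f x) \<in> borel_measurable M"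
    using assms(1) by measurable
  show "AE x in M. norm (indicator C (T x) * f x) \<le> norm (f x)"
    by (auto simp: indicator_def)
qed

lemma emeasure_dd:
  fixes h :: "'a \<Rightarrow> real"
  assumes [measurable]: "T \<in> measurable M N" "h \<in> borel_measurable M" and nn: "AE x in M. 0 \<le> h x"
    and hi: "integrable M h" and C[measurable]: "C \<in> sets N"
  shows "emeasure (distr (density M h) N T) C = ennreal (\<integral>x. indicator C (T x) * h x \<partial>M)"
proof -
  have "measurable (density M h) N = measurable M N" by (rule measurable_cong_sets) simp_all
  then have Tm: "T \<in> measurable (density M h) N" using assms(1) by simp
  have S: "T -` C \<inter> space M \<in> sets M" by (rule measurable_sets[OF assms(1) C])
  have "emeasure (distr (density M h) N T) C = emeasure (density M h) (T -` C \<inter> space M)"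
    using emeasure_distr[OF Tm C] by simp
  also have "\<dots> = (\<integral>\<^sup>+ x. ennreal (h x) * indicator (T -` C \<inter> space M) x \<partial>M)"
    by (rule emeasure_density[OF _ S]) simp
  also have "\<dots> = (\<integral>\<^sup>+ x. ennreal (indicator C (T x) * h x) \<partial>M)"
    by (intro nn_integral_cong) (simp add: indicator_def)
  also have "\<dots> = ennreal (\<integral>x. indicator C (T x) * h x \<partial>M)"
  proof (rule nn_integral_eq_integral)
    show "integrable M (\<lambda>x. indicator C (T x) * h x)" using integrable_ind_comp[OF hi assms(1) C] .
    show "AE x in M. 0 \<le> indicator C (T x) * h x" using nn by eventually_elim simp
  qed
  finally show ?thesis .
qed

lemma distr_density_eq:
  fixes h1 h2 :: "'a \<Rightarrow> real"
  assumes [measurable]: "T1 \<in> measurable M N" "T2 \<in> measurable M N"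
    "h1 \<in> borel_measurable M" "h2 \<in> borel_measurable M"
    and nn1: "AE x in M. 0 \<le> h1 x" and nn2: "AE x in M. 0 \<le> h2 x"
    and i1: "integrable M h1" and i2: "integrable M h2"
    and E: "Int_stable E" "E \<subseteq> Pow (space N)" "sets N = sigma_sets (space N) E" "space N \<in> E"
    and eq: "\<And>C. C \<in> E \<Longrightarrow> (\<integral>x. indicator C (T1 x) * h1 x \<partial>M) = (\<integral>x. indicator C (T2 x) * h2 x \<partial>M)"
  shows "distr (density M h1) N T1 = distr (density M h2) N T2"
proof (rule measure_eqI_generator_eq[where E=E and \<Omega>="space N" and A="\<lambda>_. space N"])
  show "Int_stable E" "E \<subseteq> Pow (space N)" using E by auto
  have EN: "C \<in> sets N" if "C \<in> E" for C using E that by auto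
  show "emeasure (distr (density M h1) N T1) C = emeasure (distr (density M h2) N T2) C" if "C \<in> E" for C
    using emeasure_dd[OF _ _ nn1 i1 EN[OF that]] emeasure_dd[OF _ _ nn2 i2 EN[OF that]] eq[OF that] by simp
  show "sets (distr (density M h1) N T1) = sigma_sets (space N) E" using E by simp
  show "sets (distr (density M h2) N T2) = sigma_sets (space N) E" using E by simp
  show "range (\<lambda>_. space N) \<subseteq> E" using E by auto
  show "(\<Union>i::nat. space N) = space N" by simp
  show "emeasure (distr (density M h1) N T1) (space N) \<noteq> \<infinity>"
    using emeasure_dd[OF _ _ nn1 i1 sets.top[of N]] by simp
qed

lemma integral_dd:
  fixes h :: "'a \<Rightarrow> real" and \<phi> :: "'b \<Rightarrow> real"
  assumes [measurable]: "T \<in> measurable M N" "h \<in> borel_measurable M" "\<phi> \<in> borel_measurable N"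
    and nn: "AE x in M. 0 \<le> h x"
  shows "(\<integral>y. \<phi> y \<partial>distr (density M h) N T) = (\<integral>x. h x * \<phi> (T x) \<partial>M)"
proof -
  have "measurable (density M h) N = measurable M N" by (rule measurable_cong_sets) simp_all
  then have Tm: "T \<in> measurable (density M h) N" using assms(1) by simp
  have "(\<integral>y. \<phi> y \<partial>distr (density M h) N T) = (\<integral>x. \<phi> (T x) \<partial>density M h)"
    by (rule integral_distr[OF Tm]) simp
  also have "\<dots> = (\<integral>x. h x *\<^sub>R \<phi> (T x) \<partial>M)"
    by (rule integral_density) (use nn in auto)
  finally show ?thesis by simp
qed

lemma set_integral_ext:
  fixes f g :: "'a \<Rightarrow> real"
  assumes [measurable]: "T \<in> measurable M N"
    and fi: "integrable M f" and gi: "integrable M g"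
    and E: "Int_stable E" "E \<subseteq> Pow (space N)" "sets N = sigma_sets (space N) E" "space N \<in> E"
    and eq: "\<And>C. C \<in> E \<Longrightarrow> (\<integral>x. indicator C (T x) * f x \<partial>M) = (\<integral>x. indicator C (T x) * g x \<partial>M)"
    and C: "C \<in> sets N"
  shows "(\<integral>x. indicator C (T x) * f x \<partial>M) = (\<integral>x. indicator C (T x) * g x \<partial>M)"
proof -
  have [measurable]: "f \<in> borel_measurable M" "g \<in> borel_measurable M" using fi gi by auto
  define h1 where "h1 = (\<lambda>x. max (f x) 0 + max (- g x) 0)"
  define h2 where "h2 = (\<lambda>x. max (- f x) 0 + max (g x) 0)"
  have [measurable]: "h1 \<in> borel_measurable M" "h2 \<in> borel_measurable M" unfolding h1_def h2_def by measurable
  have i1: "integrable M h1" unfolding h1_def using fi gi by auto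
  have i2: "integrable M h2" unfolding h2_def using fi gi by auto
  have dif: "h1 x - h2 x = f x - g x" for x unfolding h1_def h2_def by auto
  have key: "(\<integral>x. indicator C (T x) * h1 x \<partial>M) = (\<integral>x. indicator C (T x) * h2 x \<partial>M) \<longleftrightarrow>
      (\<integral>x. indicator C (T x) * f x \<partial>M) = (\<integral>x. indicator C (T x) * g x \<partial>M)" if C: "C \<in> sets N" for C
  proof -
    have "(\<integral>x. indicator C (T x) * h1 x \<partial>M) - (\<integral>x. indicator C (T x) * h2 x \<partial>M) = 
        (\<integral>x. indicator C (T x) * h1 x - indicator C (T x) * h2 x \<partial>M)"
      using integrable_ind_comp[OF i1 _ C] integrable_ind_comp[OF i2 _ C] by simp
    also have "\<dots> = (\<integral>x. indicator C (T x) * f x - indicator C (T x) * g x \<partial>M)"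
      by (intro Bochner_Integration.integral_cong refl) (metis dif right_diff_distrib)
    also have "\<dots> = (\<integral>x. indicator C (T x) * f x \<partial>M) - (\<integral>x. indicator C (T x) * g x \<partial>M)"
      using integrable_ind_comp[OF fi _ C] integrable_ind_comp[OF gi _ C] by simp
    finally show ?thesis by linarith
  qed
  have EN: "C \<in> sets N" if "C \<in> E" for C using E that by auto
  have deq: "distr (density M h1) N T = distr (density M h2) N T"
  proof (rule distr_density_eq[OF _ _ _ _ _ _ i1 i2 E])
    show "AE x in M. 0 \<le> h1 x" "AE x in M. 0 \<le> h2 x" by (auto simp: h1_def h2_def)
    fix C assume "C \<in> E"
    then show "(\<integral>x. indicator C (T x) * h1 x \<partial>M) = (\<integral>x. indicator C (T x) * h2 x \<partial>M)"
      using key[OF EN] eq by blast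
  qed simp_all
  have "(\<integral>x. h1 x * indicator C (T x) \<partial>M) = (\<integral>x. h2 x * indicator C (T x) \<partial>M)"
    using integral_dd[of T M N h1 "indicator C"] integral_dd[of T M N h2 "indicator C"] deq C
    by (auto simp: h1_def h2_def)
  then show ?thesis using key[OF C] by (simp add: mult.commute)
qed

context cond_setup
begin

interpretation prob_space M by (rule M)
interpretation SF: sigma_finite_subalgebra M F by (rule sfs_F)

lemma U_F[measurable]: "U \<in> borel_measurable F" by simp
lemma U_int: "integrable M U" using SF.real_cond_exp_int(1)[OF Xi] .

lemma L0s:
  assumes K: "finite K" "inj_on s K" "s ` K \<subseteq> I" and B: "\<And>k. k \<in> K \<Longrightarrow> B k \<in> sets borel" and A: "A \<in> sets borel"
  shows "measure M {\<omega> \<in> space M. Y \<omega> \<in> A \<and> (\<forall>k\<in>K. Xs (s k) \<omega> \<in> B k)} =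
         (\<integral>\<omega>. indicator A (Y \<omega>) * (\<Prod>k\<in>K. kap (B k) \<omega>) \<partial>M)"
proof -
  define B' where "B' = (\<lambda>j. B (the_inv_into K s j))"
  have B'k: "B' (s k) = B k" if "k \<in> K" for k using K that by (simp add: B'_def the_inv_into_f_f)
  have "measure M {\<omega> \<in> space M. Y \<omega> \<in> A \<and> (\<forall>j\<in>s ` K. Xs j \<omega> \<in> B' j)} =
         (\<integral>\<omega>. indicator A (Y \<omega>) * (\<Prod>j\<in>s ` K. kap (B' j) \<omega>) \<partial>M)"
    by (rule L0[OF K(3) _ A]) (auto simp: B'k B)
  moreover have "{\<omega> \<in> space M. Y \<omega> \<in> A \<and> (\<forall>j\<in>s ` K. Xs j \<omega> \<in> B' j)} = {\<omega> \<in> space M. Y \<omega> \<in> A \<and> (\<forall>k\<in>K. Xs (s k) \<omega> \<in> B k)}"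
    by (auto simp: B'k)
  moreover have "(\<Prod>j\<in>s ` K. kap (B' j) \<omega>) = (\<Prod>k\<in>K. kap (B k) \<omega>)" for \<omega>
    using K by (simp add: prod.reindex B'k)
  ultimately show ?thesis by simp
qed

lemma L1s:
  assumes K: "finite K" "inj_on s K" "s ` K \<subseteq> I" and B: "\<And>k. k \<in> K \<Longrightarrow> B k \<in> sets borel"
  shows "AE \<omega> in M. real_cond_exp M F (indicator {\<omega> \<in> space M. \<forall>k\<in>K. Xs (s k) \<omega> \<in> B k}) \<omega> = (\<Prod>k\<in>K. kap (B k) \<omega>)"
proof -
  define B' where "B' = (\<lambda>j. B (the_inv_into K s j))"
  have B'k: "B' (s k) = B k" if "k \<in> K" for k using K that by (simp add: B'_def the_inv_into_f_f)
  have "AE \<omega> in M. real_cond_exp M F (indicator {\<omega> \<in> space M. \<forall>j\<in>s ` K. Xs j \<omega> \<in> B' j}) \<omega> = (\<Prod>j\<in>s ` K. kap (B' j) \<omega>)"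
    by (rule L1[OF K(3)]) (auto simp: B'k B)
  moreover have "{\<omega> \<in> space M. \<forall>j\<in>s ` K. Xs j \<omega> \<in> B' j} = {\<omega> \<in> space M. \<forall>k\<in>K. Xs (s k) \<omega> \<in> B k}"
    by (auto simp: B'k)
  moreover have "(\<Prod>j\<in>s ` K. kap (B' j) \<omega>) = (\<Prod>k\<in>K. kap (B k) \<omega>)" for \<omega>
    using K by (simp add: prod.reindex B'k)
  ultimately show ?thesis by simp
qed

lemma law:
  assumes j: "j \<in> I"
  shows "distr M borel (Xs j) = distr M borel X"
proof (rule measure_eqI)
  fix C :: "real set" assume "C \<in> sets (distr M borel (Xs j))"
  then have C[measurable]: "C \<in> sets borel" by simp
  have "measure M {\<omega> \<in> space M. Y \<omega> \<in> UNIV \<and> (\<forall>k\<in>{0::nat}. Xs ((\<lambda>_. j) k) \<omega> \<in> C)} =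
      (\<integral>\<omega>. indicator UNIV (Y \<omega>) * (\<Prod>k\<in>{0::nat}. kap C \<omega>) \<partial>M)"
    by (rule L0s) (use j in auto)
  then have "measure M (Xs j -` C \<inter> space M) = (\<integral>\<omega>. kap C \<omega> \<partial>M)"
    by (simp add: vimage_def Int_def conj_commute)
  also have "\<dots> = (\<integral>\<omega>. indicator C (X \<omega>) \<partial>M)"
    unfolding kap_def by (rule SF.real_cond_exp_int(2)) (intro integrable_const_bound[where B=1]; simp)
  also have "\<dots> = (\<integral>\<omega>. indicator (X -` C \<inter> space M) \<omega> \<partial>M)"
    by (intro Bochner_Integration.integral_cong) (auto simp: indicator_def)
  also have "\<dots> = measure M (X -` C \<inter> space M)"
    by (simp add: Int_absorb2)
  finally have "measure M (Xs j -` C \<inter> space M) = measure M (X -` C \<inter> space M)" .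
  then show "emeasure (distr M borel (Xs j)) C = emeasure (distr M borel X) C"
    using j by (simp add: emeasure_distr emeasure_eq_measure)
qed simp

lemma law_int:
  fixes \<phi> :: "real \<Rightarrow> real"
  assumes j: "j \<in> I" and [measurable]: "\<phi> \<in> borel_measurable borel"
  shows "integrable M (\<lambda>\<omega>. \<phi> (Xs j \<omega>)) \<longleftrightarrow> integrable M (\<lambda>\<omega>. \<phi> (X \<omega>))"
    "(\<integral>\<omega>. \<phi> (Xs j \<omega>) \<partial>M) = (\<integral>\<omega>. \<phi> (X \<omega>) \<partial>M)"
proof -
  have [measurable]: "Xs j \<in> borel_measurable M" using j by (rule Xsm)
  show "integrable M (\<lambda>\<omega>. \<phi> (Xs j \<omega>)) \<longleftrightarrow> integrable M (\<lambda>\<omega>. \<phi> (X \<omega>))"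
    using integrable_distr_eq[of "Xs j" M borel \<phi>] integrable_distr_eq[of X M borel \<phi>] law[OF j] by simp
  show "(\<integral>\<omega>. \<phi> (Xs j \<omega>) \<partial>M) = (\<integral>\<omega>. \<phi> (X \<omega>) \<partial>M)"
    using integral_distr[of "Xs j" M borel \<phi>] integral_distr[of X M borel \<phi>] law[OF j] by simp
qed

end

lemma Int_stable_sets: "Int_stable (sets N)"
  by (auto simp: Int_stable_def)

context cond_setup
begin

interpretation prob_space M by (rule M)
interpretation SF: sigma_finite_subalgebra M F by (rule sfs_F)

lemma BASE:
  fixes n :: nat and s :: "nat \<Rightarrow> 'i"
  assumes s: "inj_on s {..n}" "s ` {..n} \<subseteq> I" and a[measurable]: "a \<in> sets borel"
    and B: "\<And>k. k < n \<Longrightarrow> B k \<in> sets borel"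
  shows "(\<integral>\<omega>. indicator a (Y \<omega>) * indicator {\<omega> \<in> space M. \<forall>k<n. Xs (s k) \<omega> \<in> B k} \<omega> * Xs (s n) \<omega> \<partial>M) =
         (\<integral>\<omega>. indicator a (Y \<omega>) * indicator {\<omega> \<in> space M. \<forall>k<n. Xs (s k) \<omega> \<in> B k} \<omega> * U \<omega> \<partial>M)"
proof -
  have sI: "s k \<in> I" if "k \<le> n" for k using s that by auto
  have Xsk[measurable]: "Xs (s k) \<in> borel_measurable M" if "k \<le> n" for k using sI[OF that] by (rule Xsm)
  have Bm[measurable]: "B k \<in> sets borel" if "k < n" for k using B that .
  define R where "R = {\<omega> \<in> space M. \<forall>k<n. Xs (s k) \<omega> \<in> B k}"
  have Xsk'[measurable]: "Xs (s k) \<in> borel_measurable M" if "k \<in> {..<n}" for k using that by (intro Xsk) auto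
  have Bm'[measurable]: "B k \<in> sets borel" if "k \<in> {..<n}" for k using B that by simp
  have "R = {\<omega> \<in> space M. \<forall>k\<in>{..<n}. Xs (s k) \<omega> \<in> B k}" unfolding R_def by auto
  also have "\<dots> \<in> sets M" by measurable
  finally have Rm[measurable]: "R \<in> sets M" .
  define W where "W = (\<lambda>\<omega>. indicator a (Y \<omega>) * (\<Prod>k<n. kap (B k) \<omega>))"
  have WF[measurable]: "W \<in> borel_measurable F" unfolding W_def by measurable
  have WM[measurable]: "W \<in> borel_measurable M" by (rule measurable_from_subalg[OF subalg_F WF])
  have W01: "AE \<omega> in M. 0 \<le> W \<omega> \<and> W \<omega> \<le> 1"
  proof -
    have "AE \<omega> in M. 0 \<le> (\<Prod>k<n. kap (B k) \<omega>) \<and> (\<Prod>k<n. kap (B k) \<omega>) \<le> 1"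
      by (rule prod_kap_01) (auto simp: B)
    then show ?thesis unfolding W_def by eventually_elim (auto simp: indicator_def)
  qed
  have Wi: "integrable M W" 
  proof (rule integrable_const_bound[where B=1])
    show "AE x in M. norm (W x) \<le> 1" using W01 by eventually_elim auto
  qed simp
  have WX: "integrable M (\<lambda>\<omega>. W \<omega> * X \<omega>)"
  proof (rule Bochner_Integration.integrable_bound[where f=X])
    show "AE x in M. norm (W x * X x) \<le> norm (X x)"
      using W01 by eventually_elim (auto simp: abs_mult intro: mult_left_le_one_le)
  qed (use Xi in auto)
  define h1 where "h1 = (\<lambda>\<omega>. indicator a (Y \<omega>) * indicator R \<omega> :: real)"
  have h1m[measurable]: "h1 \<in> borel_measurable M" unfolding h1_def by measurable
  have h1i: "integrable M h1" unfolding h1_def by (rule integrable_const_bound[where B=1]) (auto simp: indicator_def)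
  have eqC: "(\<integral>\<omega>. indicator C (Xs (s n) \<omega>) * h1 \<omega> \<partial>M) = (\<integral>\<omega>. indicator C (X \<omega>) * W \<omega> \<partial>M)"
    if C[measurable]: "C \<in> sets borel" for C
  proof -
    define B' where "B' = B(n := C)"
    have B'm: "B' k \<in> sets borel" if "k \<in> {..n}" for k using that B C by (auto simp: B'_def)
    have "(\<integral>\<omega>. indicator C (Xs (s n) \<omega>) * h1 \<omega> \<partial>M) = 
        (\<integral>\<omega>. indicator {\<omega> \<in> space M. Y \<omega> \<in> a \<and> (\<forall>k\<in>{..n}. Xs (s k) \<omega> \<in> B' k)} \<omega> \<partial>M)"
      unfolding h1_def R_def B'_def
      by (intro Bochner_Integration.integral_cong) (auto simp: indicator_def le_less)
    also have "\<dots> = measure M {\<omega> \<in> space M. Y \<omega> \<in> a \<and> (\<forall>k\<in>{..n}. Xs (s k) \<omega> \<in> B' k)}"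
      by (simp add: Int_absorb2)
    also have "\<dots> = (\<integral>\<omega>. indicator a (Y \<omega>) * (\<Prod>k\<in>{..n}. kap (B' k) \<omega>) \<partial>M)"
      by (rule L0s) (use s B'm in auto)
    also have "\<dots> = (\<integral>\<omega>. W \<omega> * kap C \<omega> \<partial>M)"
    proof (intro Bochner_Integration.integral_cong refl)
      fix \<omega>
      have "(\<Prod>k\<in>{..n}. kap (B' k) \<omega>) = (\<Prod>k<n. kap (B' k) \<omega>) * kap (B' n) \<omega>"
        by (simp add: lessThan_Suc_atMost[symmetric])
      also have "(\<Prod>k<n. kap (B' k) \<omega>) = (\<Prod>k<n. kap (B k) \<omega>)"
        by (intro prod.cong) (auto simp: B'_def)
      finally show "indicator a (Y \<omega>) * (\<Prod>k\<in>{..n}. kap (B' k) \<omega>) = W \<omega> * kap C \<omega>"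
        by (simp add: W_def B'_def)
    qed
    also have "\<dots> = (\<integral>\<omega>. W \<omega> * indicator C (X \<omega>) \<partial>M)"
      unfolding kap_def
    proof (rule SF.real_cond_exp_intg(2))
      show "integrable M (\<lambda>x. W x * indicator C (X x))"
      proof (rule integrable_const_bound[where B=1])
        show "AE x in M. norm (W x * indicator C (X x)) \<le> 1"
          using W01 by eventually_elim (auto simp: indicator_def)
      qed simp
    qed simp_all
    finally show ?thesis by (simp add: mult.commute)
  qed
  have deq: "distr (density M h1) borel (Xs (s n)) = distr (density M W) borel X"
  proof (rule distr_density_eq[where E="sets borel"])
    show "AE x in M. 0 \<le> h1 x" by (auto simp: h1_def)
    show "AE x in M. 0 \<le> W x" using W01 by eventually_elim auto
    show "sets borel = sigma_sets (space borel) (sets borel)" by (metis sets.sigma_sets_eq)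
  qed (use Int_stable_sets h1i Wi eqC in auto)
  have i1: "(\<integral>\<omega>. h1 \<omega> * Xs (s n) \<omega> \<partial>M) = (\<integral>\<omega>. W \<omega> * X \<omega> \<partial>M)"
  proof -
    have "(\<integral>\<omega>. h1 \<omega> * Xs (s n) \<omega> \<partial>M) = (\<integral>y. y \<partial>distr (density M h1) borel (Xs (s n)))"
      by (rule integral_dd[symmetric]) (auto simp: h1_def)
    also have "\<dots> = (\<integral>y. y \<partial>distr (density M W) borel X)" by (simp only: deq)
    also have "\<dots> = (\<integral>\<omega>. W \<omega> * X \<omega> \<partial>M)"
    proof (rule integral_dd)
      show "AE x in M. 0 \<le> W x" using W01 by eventually_elim auto
    qed simp_all
    finally show ?thesis .
  qed
  also have "\<dots> = (\<integral>\<omega>. W \<omega> * U \<omega> \<partial>M)"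
    by (rule SF.real_cond_exp_intg(2)[symmetric]) (use WX in auto)
  also have "\<dots> = (\<integral>\<omega>. (indicator a (Y \<omega>) * U \<omega>) * real_cond_exp M F (indicator R) \<omega> \<partial>M)"
  proof (rule integral_cong_AE)
    have "AE \<omega> in M. real_cond_exp M F (indicator R) \<omega> = (\<Prod>k\<in>{..<n}. kap (B k) \<omega>)"
    proof -
      have "AE \<omega> in M. real_cond_exp M F (indicator {\<omega> \<in> space M. \<forall>k\<in>{..<n}. Xs (s k) \<omega> \<in> B k}) \<omega> = (\<Prod>k\<in>{..<n}. kap (B k) \<omega>)"
        by (rule L1s) (use s in \<open>auto simp: B intro: inj_on_subset\<close>)
      moreover have "{\<omega> \<in> space M. \<forall>k\<in>{..<n}. Xs (s k) \<omega> \<in> B k} = R" unfolding R_def by auto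
      ultimately show ?thesis by simp
    qed
    then show "AE \<omega> in M. W \<omega> * U \<omega> = indicator a (Y \<omega>) * U \<omega> * real_cond_exp M F (indicator R) \<omega>"
      by eventually_elim (simp add: W_def)
  qed simp_all
  also have "\<dots> = (\<integral>\<omega>. (indicator a (Y \<omega>) * U \<omega>) * indicator R \<omega> \<partial>M)"
  proof (rule SF.real_cond_exp_intg(2))
    show "integrable M (\<lambda>x. indicator a (Y x) * U x * indicator R x)"
    proof (rule Bochner_Integration.integrable_bound[where f=U])
      show "AE x in M. norm (indicator a (Y x) * U x * indicator R x) \<le> norm (U x)"
        by (auto simp: indicator_def)
    qed (use U_int in auto)
  qed simp_all
  finally have fin: "(\<integral>\<omega>. h1 \<omega> * Xs (s n) \<omega> \<partial>M) = (\<integral>\<omega>. indicator a (Y \<omega>) * U \<omega> * indicator R \<omega> \<partial>M)" .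
  have e2: "(\<integral>\<omega>. indicator a (Y \<omega>) * U \<omega> * indicator R \<omega> \<partial>M) = (\<integral>\<omega>. indicator a (Y \<omega>) * indicator R \<omega> * U \<omega> \<partial>M)"
    by (intro Bochner_Integration.integral_cong refl) (simp only: ac_simps)
  show ?thesis using fin e2 unfolding h1_def R_def by simp
qed

end

context cond_setup
begin

interpretation prob_space M by (rule M)
interpretation SF: sigma_finite_subalgebra M F by (rule sfs_F)

lemma Xs_int: "j \<in> I \<Longrightarrow> integrable M (Xs j)"
  using law_int(1)[of j "\<lambda>x. x"] Xi by simp

lemma ORTH:
  fixes n :: nat and s :: "nat \<Rightarrow> 'i"
  assumes s: "inj_on s {..n}" "s ` {..n} \<subseteq> I"
  shows "\<exists>G. sigma_finite_subalgebra M G \<and> U \<in> borel_measurable G \<and> (\<forall>k<n. Xs (s k) \<in> borel_measurable G)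
      \<and> (AE \<omega> in M. real_cond_exp M G (Xs (s n)) \<omega> = U \<omega>)"
proof -
  have sI: "s k \<in> I" if "k \<le> n" for k using s that by auto
  have Xsk[measurable]: "Xs (s k) \<in> borel_measurable M" if "k \<le> n" for k using sI[OF that] by (rule Xsm)
  have Xsk'[measurable]: "Xs (s k) \<in> borel_measurable M" if "k \<in> {..<n}" for k using that by (intro Xsk) auto
  define Nn where "Nn = (borel :: 'b measure) \<Otimes>\<^sub>M (\<Pi>\<^sub>M k\<in>{..<n}. (borel :: real measure))"
  define T2 where "T2 = (\<lambda>\<omega>. restrict (\<lambda>k. Xs (s k) \<omega>) {..<n})"
  define Tn where "Tn = (\<lambda>\<omega>. (Y \<omega>, T2 \<omega>))"
  have T2m[measurable]: "T2 \<in> measurable M (\<Pi>\<^sub>M k\<in>{..<n}. (borel :: real measure))"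
    unfolding T2_def by measurable
  have Tnm[measurable]: "Tn \<in> measurable M Nn" unfolding Tn_def Nn_def by measurable
  define G where "G = vimage_algebra (space M) Tn Nn"
  have Tns: "Tn \<in> space M \<rightarrow> space Nn" using measurable_space[OF Tnm] by auto
  have sets_G: "sets G = {Tn -` A \<inter> space M | A. A \<in> sets Nn}"
    unfolding G_def by (rule sets_vimage_algebra2[OF Tns])
  have space_G: "space G = space M" unfolding G_def by simp
  have subG: "subalgebra M G"
    unfolding subalgebra_def using space_G sets_G measurable_sets[OF Tnm] by auto
  have sfG: "sigma_finite_subalgebra M G"
    by (rule finite_measure_subalgebra_is_sigma_finite)
       (simp add: finite_measure_subalgebra_def finite_measure_subalgebra_axioms_def subG finite_measure_axioms)
  interpret SG: sigma_finite_subalgebra M G by (rule sfG)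
  have TnG[measurable]: "Tn \<in> measurable G Nn" unfolding G_def by (rule measurable_vimage_algebra1[OF Tns])
  have YG: "Y \<in> measurable G borel"
  proof -
    have "fst \<in> measurable Nn borel" unfolding Nn_def by simp
    then have "(\<lambda>\<omega>. fst (Tn \<omega>)) \<in> measurable G borel" by (rule measurable_compose[OF TnG])
    then show ?thesis by (simp add: Tn_def)
  qed
  have XsG: "Xs (s k) \<in> borel_measurable G" if "k < n" for k
  proof -
    have kn: "k \<in> {..<n}" using that by simp
    have "(\<lambda>x. snd x k) \<in> measurable Nn borel" unfolding Nn_def using kn by measurable
    then have "(\<lambda>\<omega>. snd (Tn \<omega>) k) \<in> measurable G borel" by (rule measurable_compose[OF TnG])
    then show ?thesis using that by (simp add: Tn_def T2_def)
  qed
  have subGF: "subalgebra G F"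
  proof -
    have "sets F \<subseteq> sets G"
    proof
      fix A assume "A \<in> sets F"
      then obtain A' where A': "A' \<in> sets borel" "A = Y -` A' \<inter> space M" using sets_F by auto
      have "Y -` A' \<inter> space G \<in> sets G" using measurable_sets[OF YG A'(1)] .
      then show "A \<in> sets G" using A' space_G by simp
    qed
    then show ?thesis unfolding subalgebra_def using space_G space_F by simp
  qed
  have UG: "U \<in> borel_measurable G" by (rule measurable_from_subalg[OF subGF U_F])
  have Xi_n: "integrable M (Xs (s n))" using Xs_int sI by auto
  have key: "(\<integral>\<omega>. indicator C (Tn \<omega>) * Xs (s n) \<omega> \<partial>M) = (\<integral>\<omega>. indicator C (Tn \<omega>) * U \<omega> \<partial>M)"
    if C: "C \<in> sets Nn" for C
  proof (rule set_integral_ext[OF Tnm Xi_n U_int _ _ _ _ _ C])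
    show "Int_stable {a \<times> b | a b. a \<in> sets (borel :: 'b measure) \<and> b \<in> sets (\<Pi>\<^sub>M k\<in>{..<n}. (borel :: real measure))}"
      by (rule Int_stable_pair_measure_generator)
    show "{a \<times> b | a b. a \<in> sets (borel :: 'b measure) \<and> b \<in> sets (\<Pi>\<^sub>M k\<in>{..<n}. (borel :: real measure))} \<subseteq> Pow (space Nn)"
      unfolding Nn_def space_pair_measure by (rule pair_measure_closed)
    show "sets Nn = sigma_sets (space Nn) {a \<times> b | a b. a \<in> sets (borel :: 'b measure) \<and> b \<in> sets (\<Pi>\<^sub>M k\<in>{..<n}. (borel :: real measure))}"
      unfolding Nn_def by (simp add: sets_pair_measure space_pair_measure)
    show "space Nn \<in> {a \<times> b | a b. a \<in> sets (borel :: 'b measure) \<and> b \<in> sets (\<Pi>\<^sub>M k\<in>{..<n}. (borel :: real measure))}"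
      unfolding Nn_def space_pair_measure by blast
    fix C' assume "C' \<in> {a \<times> b | a b. a \<in> sets (borel :: 'b measure) \<and> b \<in> sets (\<Pi>\<^sub>M k\<in>{..<n}. (borel :: real measure))}"
    then obtain a b where C': "C' = a \<times> b" and a[measurable]: "a \<in> sets borel" and b: "b \<in> sets (\<Pi>\<^sub>M k\<in>{..<n}. (borel :: real measure))"
      by auto
    have fi: "integrable M (\<lambda>\<omega>. indicator a (Y \<omega>) * Xs (s n) \<omega>)"
      by (rule Bochner_Integration.integrable_bound[where f="Xs (s n)"]) (use Xi_n in \<open>auto simp: indicator_def\<close>)
    have gi: "integrable M (\<lambda>\<omega>. indicator a (Y \<omega>) * U \<omega>)"
      by (rule Bochner_Integration.integrable_bound[where f=U]) (use U_int in \<open>auto simp: indicator_def\<close>)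
    have "(\<integral>\<omega>. indicator b (T2 \<omega>) * (indicator a (Y \<omega>) * Xs (s n) \<omega>) \<partial>M) =
        (\<integral>\<omega>. indicator b (T2 \<omega>) * (indicator a (Y \<omega>) * U \<omega>) \<partial>M)"
    proof (rule set_integral_ext[OF T2m fi gi _ _ _ _ _ b])
      show "Int_stable (prod_algebra {..<n} (\<lambda>_. borel :: real measure))" by (rule Int_stable_prod_algebra)
      show "prod_algebra {..<n} (\<lambda>_. borel :: real measure) \<subseteq> Pow (space (\<Pi>\<^sub>M k\<in>{..<n}. (borel :: real measure)))"
        using prod_algebra_sets_into_space[of "{..<n}" "\<lambda>_. borel :: real measure"] by (simp add: space_PiM)
      show "sets (\<Pi>\<^sub>M k\<in>{..<n}. (borel :: real measure)) = sigma_sets (space (\<Pi>\<^sub>M k\<in>{..<n}. (borel :: real measure))) (prod_algebra {..<n} (\<lambda>_. borel :: real measure))"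
        by (simp add: sets_PiM space_PiM)
      show "space (\<Pi>\<^sub>M k\<in>{..<n}. (borel :: real measure)) \<in> prod_algebra {..<n} (\<lambda>_. borel :: real measure)"
        using space_in_prod_algebra[of "{..<n}" "\<lambda>_. borel :: real measure"] by (simp add: space_PiM)
      fix D assume "D \<in> prod_algebra {..<n} (\<lambda>_. borel :: real measure)"
      then obtain B where D: "D = (\<Pi>\<^sub>E k\<in>{..<n}. B k)" and B: "B \<in> (\<Pi> j\<in>{..<n}. sets (borel :: real measure))"
        using prod_algebra_eq_finite[of "{..<n}" "\<lambda>_. borel :: real measure"] by auto
      have Bk: "B k \<in> sets borel" if "k < n" for k using B that by auto
      have ind: "indicator D (T2 \<omega>) = indicator {\<omega> \<in> space M. \<forall>k<n. Xs (s k) \<omega> \<in> B k} \<omega>" if "\<omega> \<in> space M" for \<omega>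
        using that unfolding D T2_def by (auto simp: indicator_def)
      have "(\<integral>\<omega>. indicator D (T2 \<omega>) * (indicator a (Y \<omega>) * Xs (s n) \<omega>) \<partial>M) =
          (\<integral>\<omega>. indicator a (Y \<omega>) * indicator {\<omega> \<in> space M. \<forall>k<n. Xs (s k) \<omega> \<in> B k} \<omega> * Xs (s n) \<omega> \<partial>M)"
        by (intro Bochner_Integration.integral_cong refl) (simp add: ind)
      also have "\<dots> = (\<integral>\<omega>. indicator a (Y \<omega>) * indicator {\<omega> \<in> space M. \<forall>k<n. Xs (s k) \<omega> \<in> B k} \<omega> * U \<omega> \<partial>M)"
        by (rule BASE[OF s a Bk])
      also have "\<dots> = (\<integral>\<omega>. indicator D (T2 \<omega>) * (indicator a (Y \<omega>) * U \<omega>) \<partial>M)"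
        by (intro Bochner_Integration.integral_cong refl) (simp add: ind)
      finally show "(\<integral>\<omega>. indicator D (T2 \<omega>) * (indicator a (Y \<omega>) * Xs (s n) \<omega>) \<partial>M) =
          (\<integral>\<omega>. indicator D (T2 \<omega>) * (indicator a (Y \<omega>) * U \<omega>) \<partial>M)" .
    qed
    then show "(\<integral>\<omega>. indicator C' (Tn \<omega>) * Xs (s n) \<omega> \<partial>M) = (\<integral>\<omega>. indicator C' (Tn \<omega>) * U \<omega> \<partial>M)"
      unfolding C' Tn_def by (simp add: indicator_times mult.assoc mult.left_commute)
  qed
  have "AE \<omega> in M. real_cond_exp M G (Xs (s n)) \<omega> = U \<omega>"
  proof (rule SG.real_cond_exp_charact)
    fix A assume "A \<in> sets G"
    then obtain C where C: "C \<in> sets Nn" "A = Tn -` C \<inter> space M" using sets_G by auto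
    have "(\<integral>x\<in>A. Xs (s n) x \<partial>M) = (\<integral>\<omega>. indicator C (Tn \<omega>) * Xs (s n) \<omega> \<partial>M)"
      unfolding set_lebesgue_integral_def C(2)
      by (intro Bochner_Integration.integral_cong refl) (auto simp: indicator_def)
    also have "\<dots> = (\<integral>\<omega>. indicator C (Tn \<omega>) * U \<omega> \<partial>M)" by (rule key[OF C(1)])
    also have "\<dots> = (\<integral>x\<in>A. U x \<partial>M)"
      unfolding set_lebesgue_integral_def C(2)
      by (intro Bochner_Integration.integral_cong refl) (auto simp: indicator_def)
    finally show "(\<integral>x\<in>A. Xs (s n) x \<partial>M) = (\<integral>x\<in>A. U x \<partial>M)" .
  qed (use Xi_n U_int UG in auto)
  then show ?thesis using sfG UG XsG by blast
qed

end

lemma phiq_meas[measurable]: "phiq q \<in> borel_measurable borel"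
  unfolding phiq_def by measurable

lemma integrable_powr_sum:
  fixes Z :: "nat \<Rightarrow> 'a \<Rightarrow> real"
  assumes q: "q > 0" and Zm: "\<And>k. k < n \<Longrightarrow> Z k \<in> borel_measurable M"
    and Zi: "\<And>k. k < n \<Longrightarrow> integrable M (\<lambda>x. \<bar>Z k x\<bar> powr q)"
  shows "integrable M (\<lambda>x. \<bar>\<Sum>k<n. Z k x\<bar> powr q)"
  using Zm Zi
proof (induction n)
  case 0 then show ?case using q by simp
next
  case (Suc n)
  have "integrable M (\<lambda>x. \<bar>(\<Sum>k<n. Z k x) + Z n x\<bar> powr q)"
  proof (rule integrable_powr_add[OF q])
    show "(\<lambda>x. \<Sum>k<n. Z k x) \<in> borel_measurable M" using Suc.prems by (intro borel_measurable_sum) auto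
    show "Z n \<in> borel_measurable M" using Suc.prems by auto
    show "integrable M (\<lambda>x. \<bar>\<Sum>k<n. Z k x\<bar> powr q)" using Suc by auto
    show "integrable M (\<lambda>x. \<bar>Z n x\<bar> powr q)" using Suc.prems by auto
  qed
  then show ?case by simp
qed

context cond_setup
begin

interpretation prob_space M by (rule M)
interpretation SF: sigma_finite_subalgebra M F by (rule sfs_F)

lemma seq_moment:
  fixes N :: nat and s :: "nat \<Rightarrow> 'i" and q :: real
  assumes s: "inj_on s {..<N}" "s ` {..<N} \<subseteq> I" and q: "q > 2"
    and Xq: "integrable M (\<lambda>\<omega>. \<bar>X \<omega>\<bar> powr q)" and Uq: "integrable M (\<lambda>\<omega>. \<bar>U \<omega>\<bar> powr q)"
  shows "integrable M (\<lambda>\<omega>. \<bar>\<Sum>k<N. (Xs (s k) \<omega> - U \<omega>)\<bar> powr q) \<and>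
    (\<integral>\<omega>. \<bar>\<Sum>k<N. (Xs (s k) \<omega> - U \<omega>)\<bar> powr q \<partial>M) \<le>
      Kq q * (2 powr q * ((\<integral>\<omega>. \<bar>X \<omega>\<bar> powr q \<partial>M) + (\<integral>\<omega>. \<bar>U \<omega>\<bar> powr q \<partial>M))) * real N powr (q/2)"
proof -
  define Z where "Z = (\<lambda>k \<omega>. Xs (s k) \<omega> - U \<omega>)"
  have sI: "s k \<in> I" if "k < N" for k using s that by auto
  have Xsk[measurable]: "Xs (s k) \<in> borel_measurable M" if "k < N" for k using sI[OF that] by (rule Xsm)
  have Zm[measurable]: "Z k \<in> borel_measurable M" if "k < N" for k unfolding Z_def using that by measurable
  have Xsq: "integrable M (\<lambda>\<omega>. \<bar>Xs (s k) \<omega>\<bar> powr q)" if "k < N" for k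
    using law_int(1)[OF sI[OF that], of "\<lambda>x. \<bar>x\<bar> powr q"] Xq by simp
  have Xsq_eq: "(\<integral>\<omega>. \<bar>Xs (s k) \<omega>\<bar> powr q \<partial>M) = (\<integral>\<omega>. \<bar>X \<omega>\<bar> powr q \<partial>M)" if "k < N" for k
    using law_int(2)[OF sI[OF that], of "\<lambda>x. \<bar>x\<bar> powr q"] by simp
  have Zi: "integrable M (\<lambda>x. \<bar>Z k x\<bar> powr q)" if "k < N" for k
    unfolding Z_def using integrable_powr_add[of q "Xs (s k)" M "\<lambda>\<omega>. - U \<omega>"] q Xsq[OF that] Uq that by simp
  have Zb: "(\<integral>x. \<bar>Z k x\<bar> powr q \<partial>M) \<le> 2 powr q * ((\<integral>\<omega>. \<bar>X \<omega>\<bar> powr q \<partial>M) + (\<integral>\<omega>. \<bar>U \<omega>\<bar> powr q \<partial>M))"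
    if k: "k < N" for k
  proof -
    have "(\<integral>x. \<bar>Z k x\<bar> powr q \<partial>M) \<le> (\<integral>x. 2 powr q * (\<bar>Xs (s k) x\<bar> powr q + \<bar>U x\<bar> powr q) \<partial>M)"
    proof (rule integral_mono)
      show "integrable M (\<lambda>x. \<bar>Z k x\<bar> powr q)" by (rule Zi[OF k])
      show "integrable M (\<lambda>x. 2 powr q * (\<bar>Xs (s k) x\<bar> powr q + \<bar>U x\<bar> powr q))" using Xsq[OF k] Uq by auto
      show "\<bar>Z k x\<bar> powr q \<le> 2 powr q * (\<bar>Xs (s k) x\<bar> powr q + \<bar>U x\<bar> powr q)" for x
        unfolding Z_def using pow_sum_bound[of q "Xs (s k) x" "- U x"] q by simp
    qed
    also have "\<dots> = 2 powr q * ((\<integral>\<omega>. \<bar>X \<omega>\<bar> powr q \<partial>M) + (\<integral>\<omega>. \<bar>U \<omega>\<bar> powr q \<partial>M))"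
      using Xsq[OF k] Uq Xsq_eq[OF k] by simp
    finally show ?thesis .
  qed
  have orth: "(\<integral>x. phiq q (\<Sum>k<n. Z k x) * Z n x \<partial>M) = 0" if n: "n < N" for n
  proof -
    have s': "inj_on s {..n}" "s ` {..n} \<subseteq> I" using s n by (auto intro: inj_on_subset)
    obtain G where G: "sigma_finite_subalgebra M G" "U \<in> borel_measurable G" "\<forall>k<n. Xs (s k) \<in> borel_measurable G"
      "AE \<omega> in M. real_cond_exp M G (Xs (s n)) \<omega> = U \<omega>"
      using ORTH[OF s'] by blast
    interpret SG: sigma_finite_subalgebra M G by (rule G(1))
    define f where "f = (\<lambda>x. phiq q (\<Sum>k<n. Z k x))"
    have fG: "f \<in> borel_measurable G"
    proof -
      have "(\<lambda>x. \<Sum>k<n. Z k x) \<in> borel_measurable G"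
        unfolding Z_def using G(2,3) by (intro borel_measurable_sum borel_measurable_diff) auto
      then show ?thesis unfolding f_def by measurable
    qed
    have fM[measurable]: "f \<in> borel_measurable M" by (rule measurable_from_subalg[OF SG.subalg fG])
    have Sq: "integrable M (\<lambda>x. \<bar>\<Sum>k<n. Z k x\<bar> powr q)"
      using q n Zm Zi by (intro integrable_powr_sum) auto
    have Sm: "(\<lambda>x. \<Sum>k<n. Z k x) \<in> borel_measurable M" using n Zm by (intro borel_measurable_sum) auto
    have i1: "integrable M (\<lambda>x. f x * Xs (s n) x)"
      unfolding f_def using q Sq Xsq[OF n] Sm Xsk[OF n] by (intro integrable_phiq_mult) auto
    have i2: "integrable M (\<lambda>x. f x * U x)"
      unfolding f_def using q Sq Uq Sm by (intro integrable_phiq_mult) auto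
    have "(\<integral>x. f x * Xs (s n) x \<partial>M) = (\<integral>x. f x * real_cond_exp M G (Xs (s n)) x \<partial>M)"
      by (rule SG.real_cond_exp_intg(2)[symmetric]) (use i1 fG Xsk[OF n] in auto)
    also have "\<dots> = (\<integral>x. f x * U x \<partial>M)"
      by (rule integral_cong_AE) (use G(4) in \<open>auto elim!: eventually_mono\<close>)
    finally have "(\<integral>x. f x * Xs (s n) x \<partial>M) = (\<integral>x. f x * U x \<partial>M)" .
    moreover have "(\<integral>x. f x * Z n x \<partial>M) = (\<integral>x. f x * Xs (s n) x \<partial>M) - (\<integral>x. f x * U x \<partial>M)"
      unfolding Z_def using i1 i2 by (simp add: right_diff_distrib)
    ultimately show ?thesis by (simp add: f_def)
  qed
  show ?thesis
    using moment_bound[OF M q Zm Zi Zb orth] by (simp add: Z_def)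
qed

end

lemma delta_pw:
  fixes e0 e1 c u t p q :: real
  assumes t: "t > 0" and p: "1 \<le> p" "p \<le> q"
  shows "\<bar>max ((e0 + e1)/2) c - (1/2) * (max e0 c + max e1 c)\<bar> powr p \<le>
    t powr (p-q) * (\<bar>e0 - u\<bar> + \<bar>e1 - u\<bar>) powr q + (if \<bar>u - c\<bar> < t then t powr p else 0)"
proof -
  define \<Delta> where "\<Delta> = max ((e0 + e1)/2) c - (1/2) * (max e0 c + max e1 c)"
  define D where "D = \<bar>e0 - u\<bar> + \<bar>e1 - u\<bar>"
  have h0: "\<bar>\<Delta>\<bar> \<le> \<bar>e0 - e1\<bar>"
    unfolding \<Delta>_def by (cases "e0 \<le> c"; cases "e1 \<le> c"; cases "e0 + e1 \<le> 2*c") (auto simp: max_def abs_if field_simps)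
  have h1: "\<bar>\<Delta>\<bar> \<le> D" using h0 unfolding D_def by linarith
  have h2: "\<Delta> \<noteq> 0 \<Longrightarrow> \<bar>u - c\<bar> \<le> D"
  proof -
    assume "\<Delta> \<noteq> 0"
    then have "min e0 e1 < c \<and> c < max e0 e1"
      unfolding \<Delta>_def by (cases "e0 \<le> c"; cases "e1 \<le> c"; cases "e0 + e1 \<le> 2*c") (auto simp: max_def min_def)
    then show ?thesis unfolding D_def by (auto simp: min_def max_def abs_if split: if_splits)
  qed
  have nn: "0 \<le> t powr (p-q) * D powr q + (if \<bar>u - c\<bar> < t then t powr p else 0)" by auto
  have main: "\<bar>\<Delta>\<bar> powr p \<le> t powr (p-q) * D powr q + (if \<bar>u - c\<bar> < t then t powr p else 0)"
  proof (cases "\<Delta> = 0")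
    case True then show ?thesis using nn by simp
  next
    case False
    then have Dp: "D > 0" using h1 by linarith
    have hD: "\<bar>\<Delta>\<bar> powr p \<le> D powr p" using h1 p by (intro powr_mono2) auto
    show ?thesis
    proof (cases "D \<ge> t")
      case True
      have "D powr p = D powr q * D powr (p-q)" using Dp by (simp add: powr_add[symmetric])
      also have "\<dots> \<le> D powr q * t powr (p-q)"
        using True t p by (intro mult_left_mono powr_mono2') auto
      finally have "\<bar>\<Delta>\<bar> powr p \<le> t powr (p-q) * D powr q" using hD by (simp add: mult.commute)
      moreover have "0 \<le> (if \<bar>u - c\<bar> < t then t powr p else 0)" by simp
      ultimately show ?thesis by linarith
    next
      case False
      then have "\<bar>u - c\<bar> < t" using h2[OF \<open>\<Delta> \<noteq> 0\<close>] by linarith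
      moreover have "D powr p \<le> t powr p" using False Dp p by (intro powr_mono2) auto
      moreover have "0 \<le> t powr (p-q) * D powr q" by simp
      ultimately show ?thesis using hD by (simp add: add_increasing)
    qed
  qed
  then show ?thesis by (simp only: \<Delta>_def D_def)
qed

lemma powr_convex0:
  fixes a b t q :: real
  assumes "a \<ge> 0" "b \<ge> 0" "0 \<le> t" "t \<le> 1" "q \<ge> 1"
  shows "(t*a + (1-t)*b) powr q \<le> t * a powr q + (1-t) * b powr q"
proof (cases "a = 0 \<or> b = 0")
  case False
  then have "a \<in> {0<..}" "b \<in> {0<..}" using assms by auto
  then show ?thesis using convex_onD[OF powr_convex[OF assms(5)], of "1-t" a b] assms by simp
next
  case True
  have tq: "s powr q \<le> s" if "0 \<le> s" "s \<le> 1" for s :: real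
  proof (cases "s = 0")
    case False
    then have "s powr q \<le> s powr 1" using that assms by (intro powr_mono') auto
    then show ?thesis using that by simp
  qed (use assms in simp)
  show ?thesis
  proof (cases "a = 0")
    case True
    have "((1-t)*b) powr q = (1-t) powr q * b powr q" by (simp add: powr_mult)
    also have "\<dots> \<le> (1-t) * b powr q" using tq[of "1-t"] assms by (intro mult_right_mono) auto
    finally show ?thesis using True assms by simp
  next
    case False
    then have "b = 0" using True by auto
    have "(t*a) powr q = t powr q * a powr q" by (simp add: powr_mult)
    also have "\<dots> \<le> t * a powr q" using tq[of t] assms by (intro mult_right_mono) auto
    finally show ?thesis using \<open>b = 0\<close> assms by simp
  qed
qed

lemma convex_abs_powr: assumes "q \<ge> 1" shows "convex_on UNIV (\<lambda>x::real. \<bar>x\<bar> powr q)"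
proof (rule convex_onI)
  fix t x y :: real assume t: "0 < t" "t < 1"
  have "\<bar>(1 - t) *\<^sub>R x + t *\<^sub>R y\<bar> \<le> (1-t) * \<bar>x\<bar> + t * \<bar>y\<bar>"
    using t by (auto intro!: order.trans[OF abs_triangle_ineq] simp: abs_mult)
  then have "\<bar>(1 - t) *\<^sub>R x + t *\<^sub>R y\<bar> powr q \<le> ((1-t) * \<bar>x\<bar> + t * \<bar>y\<bar>) powr q"
    using assms by (intro powr_mono2) auto
  also have "\<dots> \<le> (1-t) * \<bar>x\<bar> powr q + (1 - (1-t)) * \<bar>y\<bar> powr q"
    using powr_convex0[of "\<bar>x\<bar>" "\<bar>y\<bar>" "1-t" q] t assms by simp
  finally show "\<bar>(1 - t) *\<^sub>R x + t *\<^sub>R y\<bar> powr q \<le> (1 - t) * \<bar>x\<bar> powr q + t * \<bar>y\<bar> powr q" by simp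
qed simp

lemma integrable_from_powr:
  fixes f :: "'a \<Rightarrow> real"
  assumes "prob_space M" "q \<ge> 1" and [measurable]: "f \<in> borel_measurable M"
    and "integrable M (\<lambda>x. \<bar>f x\<bar> powr q)"
  shows "integrable M f"
proof (rule Bochner_Integration.integrable_bound[where f="\<lambda>x. 1 + \<bar>f x\<bar> powr q"])
  interpret prob_space M by fact
  show "integrable M (\<lambda>x. 1 + \<bar>f x\<bar> powr q)" using assms by auto
  show "AE x in M. norm (f x) \<le> norm (1 + \<bar>f x\<bar> powr q)"
  proof (intro AE_I2)
    fix x
    have "\<bar>f x\<bar> \<le> 1 + \<bar>f x\<bar> powr q"
    proof (cases "\<bar>f x\<bar> \<le> 1")
      case False
      then have "\<bar>f x\<bar> powr 1 \<le> \<bar>f x\<bar> powr q" using assms by (intro powr_mono) auto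
      then show ?thesis using False by simp
    qed (simp add: add_increasing2)
    then show "norm (f x) \<le> norm (1 + \<bar>f x\<bar> powr q)" by simp
  qed
qed simp

definition Bconst :: "real \<Rightarrow> real \<Rightarrow> real \<Rightarrow> real \<Rightarrow> real" where
  "Bconst q \<delta> \<rho> CD = (CD + \<rho>) * 2 powr (q/2) + ((\<delta>/2) powr (1-q) * CD + \<rho>) * 2 powr (q/2) / \<delta> powr (q+1) + 1"

lemma final_arith:
  fixes q p w \<delta> \<rho> CD V :: real and l :: nat
  assumes q: "q > 2" and p: "1 \<le> p" "p \<le> q" and w: "2 powr (real l - 1) \<le> w" and l: "l \<ge> 1"
    and \<delta>: "0 < \<delta>" "\<delta> \<le> 1" and \<rho>: "\<rho> > 0" and CD: "CD \<ge> 0"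
    and bnd: "\<And>t. 0 < t \<Longrightarrow> t < \<delta> \<Longrightarrow> V \<le> t powr (p-q) * CD * w powr (-q/2) + \<rho> * t powr (p+1)"
  shows "V \<le> Bconst q \<delta> \<rho> CD * 2 powr (-(q * (1 + 1/p) * p * real l / (2 * (q + 1))))"
proof -
  define a where "a = q / (2*(q+1))"
  define E where "E = a * (p+1)"
  have a: "a > 0" "a * (q+1) = q/2" using q by (auto simp: a_def field_simps)
  have E0: "E > 0" unfolding E_def using a p by auto
  have "a * (p+1) \<le> a * (q+1)" using a p by (intro mult_left_mono) auto
  then have E: "E > 0" "E \<le> q/2" using E0 a(2) unfolding E_def by auto
  have ex: "q * (1 + 1/p) * p * real l / (2 * (q + 1)) = E * real l"
  proof -
    have e1: "(1 + 1/p) * p = p + 1" using p by (simp add: field_simps)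
    have "q * (1 + 1/p) * p * real l / (2 * (q + 1)) = q * ((1 + 1/p) * p) * real l / (2 * (q + 1))"
      by (simp only: mult.assoc)
    also have "\<dots> = q * (p + 1) * real l / (2 * (q + 1))" by (simp only: e1)
    also have "\<dots> = E * real l" by (simp add: E_def a_def)
    finally show ?thesis .
  qed
  have w1: "w \<ge> 1"
  proof -
    have "1 \<le> 2 powr (real l - 1)" using l by (intro ge_one_powr_ge_zero) auto
    then show ?thesis using w by linarith
  qed
  have 2: "2 powr (-(E * real l)) > 0" by simp
  have twoE: "2 powr (-(E * real l)) = 2 powr (-E) * (2 powr (real l - 1)) powr (-E)"
    by (simp add: powr_powr powr_add[symmetric] algebra_simps)
  have Bnn: "0 \<le> ((\<delta>/2) powr (1-q) * CD + \<rho>) * 2 powr (q/2) / \<delta> powr (q+1)"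
    using CD \<rho> by auto
  show ?thesis unfolding ex
  proof (cases "w powr (-a) < \<delta>")
    case True
    define t where "t = w powr (-a)"
    have t: "0 < t" "t < \<delta>" using True w1 by (auto simp: t_def)
    have "V \<le> t powr (p-q) * CD * w powr (-q/2) + \<rho> * t powr (p+1)" by (rule bnd[OF t])
    also have "t powr (p-q) * CD * w powr (-q/2) = CD * w powr (-E)"
    proof -
      have "t powr (p-q) * w powr (-q/2) = w powr (-a*(p-q) + -q/2)"
        using w1 by (simp add: t_def powr_powr powr_add[symmetric])
      also have "-a*(p-q) + -q/2 = -E" unfolding E_def using a(2) by (simp add: algebra_simps)
      finally show ?thesis by (simp add: algebra_simps)
    qed
    also have "t powr (p+1) = w powr (-E)" using w1 by (simp add: t_def powr_powr E_def)
    finally have V1: "V \<le> (CD + \<rho>) * w powr (-E)" by (simp add: algebra_simps)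
    have "w powr (-E) \<le> (2 powr (real l - 1)) powr (-E)"
      using w E by (intro powr_mono2') auto
    also have "\<dots> = 2 powr E * 2 powr (-(E * real l))"
      using twoE by (simp add: powr_minus field_simps)
    also have "\<dots> \<le> 2 powr (q/2) * 2 powr (-(E * real l))"
      using E by (intro mult_right_mono powr_mono) auto
    finally have "(CD + \<rho>) * w powr (-E) \<le> (CD + \<rho>) * (2 powr (q/2) * 2 powr (-(E * real l)))"
      using CD \<rho> by (intro mult_left_mono) auto
    with V1 have "V \<le> (CD + \<rho>) * 2 powr (q/2) * 2 powr (-(E * real l))" by (simp add: mult.assoc)
    also have "\<dots> \<le> Bconst q \<delta> \<rho> CD * 2 powr (-(E * real l))"
      unfolding Bconst_def using Bnn 2 by (intro mult_right_mono) auto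
    finally show "V \<le> Bconst q \<delta> \<rho> CD * 2 powr (-(E * real l))" .
  next
    case False
    define t where "t = \<delta>/2"
    have t: "0 < t" "t < \<delta>" "t \<le> 1/2" using \<delta> by (auto simp: t_def)
    have "V \<le> t powr (p-q) * CD * w powr (-q/2) + \<rho> * t powr (p+1)" by (rule bnd[OF t(1,2)])
    also have "\<dots> \<le> t powr (1-q) * CD + \<rho>"
    proof -
      have "t powr (p-q) \<le> t powr (1-q)" using t p by (intro powr_mono') auto
      moreover have "w powr (-q/2) \<le> 1" using w1 q by (simp add: powr_minus inverse_le_1_iff ge_one_powr_ge_zero)
      moreover have "t powr (p+1) \<le> 1"
      proof -
        have "t powr (p+1) \<le> t" using t p by (intro powr_le_one_le) auto
        then show ?thesis using t by linarith
      qed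
      ultimately have "t powr (p-q) * CD * w powr (-q/2) \<le> t powr (1-q) * CD * 1"
        using CD by (intro mult_mono) auto
      moreover have "\<rho> * t powr (p+1) \<le> \<rho>" using \<open>t powr (p+1) \<le> 1\<close> \<rho> by simp
      ultimately show ?thesis by simp
    qed
    finally have V2: "V \<le> (\<delta>/2) powr (1-q) * CD + \<rho>" by (simp add: t_def)
    have low: "2 powr (-(q/2)) * \<delta> powr (q+1) \<le> 2 powr (-(E * real l))"
    proof -
      have "\<delta> powr (q+1) \<le> \<delta> powr (p+1)" using \<delta> p by (intro powr_mono') auto
      also have "\<delta> powr (p+1) \<le> (w powr (-a)) powr (p+1)" using False \<delta> p by (intro powr_mono2) auto
      also have "\<dots> = w powr (-E)" using w1 by (simp add: powr_powr E_def)
      also have "\<dots> \<le> (2 powr (real l - 1)) powr (-E)" 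
        by (rule powr_mono2'[of "-E"]) (use w E in auto)
      finally have h: "\<delta> powr (q+1) \<le> (2 powr (real l - 1)) powr (-E)" .
      have "2 powr (-(q/2)) \<le> 2 powr (-E)" using E by (intro powr_mono) auto
      then show ?thesis unfolding twoE using h by (intro mult_mono) auto
    qed
    have dp: "\<delta> powr (q+1) > 0" using \<delta> by simp
    have "V \<le> ((\<delta>/2) powr (1-q) * CD + \<rho>) * 1" using V2 by simp
    also have "\<dots> = ((\<delta>/2) powr (1-q) * CD + \<rho>) * 2 powr (q/2) / \<delta> powr (q+1) * (2 powr (-(q/2)) * \<delta> powr (q+1))"
      using dp by (simp add: powr_minus field_simps)
    also have "\<dots> \<le> ((\<delta>/2) powr (1-q) * CD + \<rho>) * 2 powr (q/2) / \<delta> powr (q+1) * 2 powr (-(E * real l))"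
      using low Bnn by (intro mult_left_mono) auto
    also have "\<dots> \<le> Bconst q \<delta> \<rho> CD * 2 powr (-(E * real l))"
      unfolding Bconst_def using CD \<rho> 2 by (intro mult_right_mono) auto
    finally show "V \<le> Bconst q \<delta> \<rho> CD * 2 powr (-(E * real l))" .
  qed
qed

lemma sfs_rv:
  assumes "prob_space M" and Ym: "Y \<in> borel_measurable M"
  shows "sigma_finite_subalgebra M (sigma_rv M Y)"
proof -
  interpret prob_space M by fact
  have Ys: "Y \<in> space M \<rightarrow> space borel" using measurable_space[OF Ym] by auto
  have "sets (sigma_rv M Y) = {Y -` A \<inter> space M | A. A \<in> sets borel}"
    unfolding sigma_rv_def by (rule sets_vimage_algebra2[OF Ys])
  then have sub: "subalgebra M (sigma_rv M Y)"
    unfolding subalgebra_def sigma_rv_def using measurable_sets[OF Ym] by auto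
  show ?thesis
    by (rule finite_measure_subalgebra_is_sigma_finite)
       (simp add: finite_measure_subalgebra_def finite_measure_subalgebra_axioms_def sub finite_measure_axioms)
qed

lemma delta_bound:
  fixes t p q :: real
  assumes "t > 0" "1 \<le> p" "p \<le> q"
  shows "\<bar>Delta_ant M0 l Xs piY \<omega>\<bar> powr p \<le>
    t powr (p-q) * (\<bar>Ehat M0 l Xs 0 \<omega> - u\<bar> + \<bar>Ehat M0 l Xs 1 \<omega> - u\<bar>) powr q
    + (if \<bar>u - piY \<omega>\<bar> < t then t powr p else 0)"
  unfolding Delta_ant_def using delta_pw[OF assms] by simp

lemma Ehat_diff:
  assumes "Mlev M0 (l - 1) > 0"
  shows "Ehat M0 l Xs i \<omega> - u = (\<Sum>k<Mlev M0 (l - 1). (Xs (i, k) \<omega> - u)) / real (Mlev M0 (l - 1))"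
  using assms by (simp add: Ehat_def sum_subtractf field_simps)

theorem proposition2p3:
  fixes M :: "'a measure" and Y :: "'a \<Rightarrow> real ^ 'd" and X :: "'a \<Rightarrow> real"
    and \<pi> :: "real ^ 'd \<Rightarrow> real" and q :: real and M0 :: nat
  assumes "prob_space M"
    and "Y \<in> borel_measurable M" and "X \<in> borel_measurable M" and "\<pi> \<in> borel_measurable borel"
    and "q > 2"
    and "integrable M (\<lambda>\<omega>. \<bar>X \<omega>\<bar> powr q)"
    and "integrable M (\<lambda>\<omega>. \<bar>\<pi> (Y \<omega>)\<bar> powr q)"
    and "\<exists>\<delta>>0. \<exists>\<rho>>0. \<forall>x. 0 < x \<and> x < \<delta> \<longrightarrow>
           measure M {\<omega> \<in> space M. \<bar>real_cond_exp M (sigma_rv M Y) X \<omega> - \<pi> (Y \<omega>)\<bar> < x} \<le> \<rho> * x"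
    and "M0 \<ge> 1"
  shows "\<exists>b1>0. \<forall>l\<ge>1. \<forall>p. 1 \<le> p \<and> p \<le> q \<longrightarrow>
           (\<forall>Xs :: nat \<times> nat \<Rightarrow> 'a \<Rightarrow> real.
              cond_iid_copies M Y X ({0,1} \<times> {..<Mlev M0 (l - 1)}) Xs \<longrightarrow>
              (\<integral>\<^sup>+\<omega>. ennreal (\<bar>Delta_ant M0 l Xs (\<lambda>\<omega>. \<pi> (Y \<omega>)) \<omega>\<bar> powr p) \<partial>M)
                \<le> ennreal (b1 * 2 powr (- (q * (1 + 1 / p) * p * real l / (2 * (q + 1))))))"
proof -
  note PS = assms(1)
  interpret prob_space M by (rule PS)
  have Ym[measurable]: "Y \<in> borel_measurable M" and Xm[measurable]: "X \<in> borel_measurable M"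
    and pim[measurable]: "\<pi> \<in> borel_measurable borel" using assms by auto
  have q: "q > 2" by (rule assms(5))
  have Xq: "integrable M (\<lambda>\<omega>. \<bar>X \<omega>\<bar> powr q)" by (rule assms(6))
  obtain \<delta>0 \<rho> where \<delta>0: "\<delta>0 > 0" and \<rho>: "\<rho> > 0"
    and hyp: "\<And>x. 0 < x \<Longrightarrow> x < \<delta>0 \<Longrightarrow>
      measure M {\<omega> \<in> space M. \<bar>real_cond_exp M (sigma_rv M Y) X \<omega> - \<pi> (Y \<omega>)\<bar> < x} \<le> \<rho> * x"
    using assms(8) by blast
  define \<delta> where "\<delta> = min \<delta>0 1"
  have \<delta>: "0 < \<delta>" "\<delta> \<le> 1" "\<delta> \<le> \<delta>0" using \<delta>0 by (auto simp: \<delta>_def)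
  define U where "U = real_cond_exp M (sigma_rv M Y) X"
  have Xi: "integrable M X" using integrable_from_powr[OF PS _ Xm Xq] q by simp
  interpret SF: sigma_finite_subalgebra M "sigma_rv M Y" by (rule sfs_rv[OF PS Ym])
  have Um[measurable]: "U \<in> borel_measurable M" unfolding U_def by simp
  have Uq: "integrable M (\<lambda>\<omega>. \<bar>U \<omega>\<bar> powr q)"
    unfolding U_def
  proof (rule SF.integrable_convex_cond_exp[where I=UNIV])
    show "convex_on UNIV (\<lambda>x. \<bar>x\<bar> powr q)" using q by (intro convex_abs_powr) auto
  qed (use Xi Xq in auto)
  define m where "m = 2 powr q * ((\<integral>\<omega>. \<bar>X \<omega>\<bar> powr q \<partial>M) + (\<integral>\<omega>. \<bar>U \<omega>\<bar> powr q \<partial>M))"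
  have m: "m \<ge> 0" unfolding m_def by (auto intro!: integral_nonneg_AE add_nonneg_nonneg)
  have Kq1: "Kq q \<ge> 1" unfolding Kq_def by simp
  define CD where "CD = 2 powr (q+1) * Kq q * m"
  have CD: "CD \<ge> 0" unfolding CD_def using m Kq1 by auto
  define b1 where "b1 = Bconst q \<delta> \<rho> CD"
  have b1: "b1 > 0" unfolding b1_def Bconst_def using CD \<rho> \<delta>
    by (intro add_nonneg_pos add_nonneg_nonneg) auto
  show ?thesis
  proof (intro exI[of _ b1] conjI b1 allI impI)
    fix l :: nat and p :: real and Xs :: "nat \<times> nat \<Rightarrow> 'a \<Rightarrow> real"
    assume l: "1 \<le> l" and p: "1 \<le> p \<and> p \<le> q"
      and cid: "cond_iid_copies M Y X ({0,1} \<times> {..<Mlev M0 (l - 1)}) Xs"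
    have p1: "1 \<le> p" and pq: "p \<le> q" using p by auto
    define N where "N = Mlev M0 (l - 1)"
    have N: "N \<ge> 1" using assms(9) by (simp add: N_def Mlev_def)
    define w where "w = real N"
    have w: "w \<ge> 1" using N by (simp add: w_def)
    have w2: "2 powr (real l - 1) \<le> w"
    proof -
      have "2 powr (real l - 1) = 2 ^ (l - 1)" using l by (simp add: powr_realpow[symmetric] of_nat_diff)
      also have "\<dots> \<le> real M0 * 2 ^ (l - 1)" using assms(9) by simp
      finally show ?thesis by (simp add: w_def N_def Mlev_def)
    qed
    interpret C: cond_setup M Y X "{0,1} \<times> {..<N}" Xs
      by unfold_locales (use PS Xi cid in \<open>auto simp: N_def\<close>)
    define S where "S = (\<lambda>i \<omega>. \<Sum>k<N. (Xs (i, k) \<omega> - U \<omega>))"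
    have Sb: "integrable M (\<lambda>\<omega>. \<bar>S i \<omega>\<bar> powr q) \<and> (\<integral>\<omega>. \<bar>S i \<omega>\<bar> powr q \<partial>M) \<le> Kq q * m * w powr (q/2)"
      if i: "i \<in> {0,1}" for i
      using C.seq_moment[of "\<lambda>k. (i, k)" N q] q Xq Uq i unfolding S_def m_def w_def U_def
      by (auto simp: inj_on_def)
    have Xsm[measurable]: "Xs (i, k) \<in> borel_measurable M" if "i \<in> {0,1}" "k < N" for i k
      using that by (intro C.Xsm) auto
    have Ehm: "(\<lambda>\<omega>. Ehat M0 l Xs i \<omega>) \<in> borel_measurable M" if "i \<in> {0,1}" for i
      unfolding Ehat_def N_def[symmetric] using that by (intro borel_measurable_divide borel_measurable_sum) auto
    have Eh: "Ehat M0 l Xs i \<omega> - U \<omega> = S i \<omega> / w" for i \<omega>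
      unfolding S_def w_def N_def using Ehat_diff[of M0 l Xs i \<omega> "U \<omega>"] N by (simp add: N_def)
    have Ehq: "\<bar>Ehat M0 l Xs i \<omega> - U \<omega>\<bar> powr q = w powr (-q) * \<bar>S i \<omega>\<bar> powr q" for i \<omega>
    proof -
      have "\<bar>Ehat M0 l Xs i \<omega> - U \<omega>\<bar> = \<bar>S i \<omega>\<bar> / w" using w by (simp add: Eh abs_divide)
      moreover have "(\<bar>S i \<omega>\<bar> / w) powr q = \<bar>S i \<omega>\<bar> powr q / w powr q" by (rule powr_divide)
      ultimately show ?thesis by (simp add: powr_minus divide_inverse mult.commute)
    qed
    define D where "D = (\<lambda>\<omega>. \<bar>Ehat M0 l Xs 0 \<omega> - U \<omega>\<bar> + \<bar>Ehat M0 l Xs 1 \<omega> - U \<omega>\<bar>)"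
    have Dm[measurable]: "D \<in> borel_measurable M" unfolding D_def using Ehm by auto
    have Dq_pw: "D \<omega> powr q \<le> 2 powr q * (w powr (-q) * \<bar>S 0 \<omega>\<bar> powr q + w powr (-q) * \<bar>S 1 \<omega>\<bar> powr q)" for \<omega>
      using pow_sum_bound[of q "\<bar>Ehat M0 l Xs 0 \<omega> - U \<omega>\<bar>" "\<bar>Ehat M0 l Xs 1 \<omega> - U \<omega>\<bar>"] q
        Ehq[of 0 \<omega>] Ehq[of 1 \<omega>]
      unfolding D_def by simp
    have Si0: "integrable M (\<lambda>\<omega>. \<bar>S 0 \<omega>\<bar> powr q)" and Si1: "integrable M (\<lambda>\<omega>. \<bar>S 1 \<omega>\<bar> powr q)"
      using Sb by auto
    have Dqi: "integrable M (\<lambda>\<omega>. D \<omega> powr q)"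
    proof (rule Bochner_Integration.integrable_bound[where f="\<lambda>\<omega>. 2 powr q * (w powr (-q) * \<bar>S 0 \<omega>\<bar> powr q + w powr (-q) * \<bar>S 1 \<omega>\<bar> powr q)"])
      show "integrable M (\<lambda>\<omega>. 2 powr q * (w powr (-q) * \<bar>S 0 \<omega>\<bar> powr q + w powr (-q) * \<bar>S 1 \<omega>\<bar> powr q))"
        using Si0 Si1 by auto
      show "AE x in M. norm (D x powr q) \<le> norm (2 powr q * (w powr (-q) * \<bar>S 0 x\<bar> powr q + w powr (-q) * \<bar>S 1 x\<bar> powr q))"
        using Dq_pw by (intro AE_I2) (simp add: D_def)
    qed measurable
    have DqB: "(\<integral>\<omega>. D \<omega> powr q \<partial>M) \<le> CD * w powr (-q/2)"
    proof -
      have "(\<integral>\<omega>. D \<omega> powr q \<partial>M) \<le> (\<integral>\<omega>. 2 powr q * (w powr (-q) * \<bar>S 0 \<omega>\<bar> powr q + w powr (-q) * \<bar>S 1 \<omega>\<bar> powr q) \<partial>M)"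
        using Dqi Si0 Si1 Dq_pw by (intro integral_mono) auto
      also have "\<dots> = 2 powr q * w powr (-q) * ((\<integral>\<omega>. \<bar>S 0 \<omega>\<bar> powr q \<partial>M) + (\<integral>\<omega>. \<bar>S 1 \<omega>\<bar> powr q \<partial>M))"
        using Si0 Si1 by (simp add: algebra_simps)
      also have "\<dots> \<le> 2 powr q * w powr (-q) * (Kq q * m * w powr (q/2) + Kq q * m * w powr (q/2))"
        using Sb[of 0] Sb[of 1] by (intro mult_left_mono add_mono) auto
      also have "\<dots> = CD * (w powr (-q) * w powr (q/2))"
        by (simp add: CD_def powr_add algebra_simps)
      also have "w powr (-q) * w powr (q/2) = w powr (-q/2)"
        using w by (simp add: powr_add[symmetric])
      finally show ?thesis .
    qed
    define Del where "Del = (\<lambda>\<omega>. \<bar>Delta_ant M0 l Xs (\<lambda>\<omega>. \<pi> (Y \<omega>)) \<omega>\<bar> powr p)"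
    have Delm[measurable]: "Del \<in> borel_measurable M"
      unfolding Del_def Delta_ant_def using Ehm by auto
    have pw: "Del \<omega> \<le> t powr (p-q) * D \<omega> powr q + (if \<bar>U \<omega> - \<pi> (Y \<omega>)\<bar> < t then t powr p else 0)"
      if "t > 0" for t \<omega>
      unfolding Del_def D_def using delta_bound[OF that p1 pq, of M0 l Xs "\<lambda>\<omega>. \<pi> (Y \<omega>)" \<omega> "U \<omega>"] by simp
    have Deli: "integrable M Del"
    proof (rule Bochner_Integration.integrable_bound[where f="\<lambda>\<omega>. D \<omega> powr q + 1"])
      show "integrable M (\<lambda>\<omega>. D \<omega> powr q + 1)" using Dqi by auto
      show "AE x in M. norm (Del x) \<le> norm (D x powr q + 1)"
      proof (intro AE_I2)
        fix x
        have "Del x \<le> 1 powr (p-q) * D x powr q + (if \<bar>U x - \<pi> (Y x)\<bar> < 1 then 1 powr p else 0)"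
          by (rule pw) simp
        then have "Del x \<le> D x powr q + 1" by (auto split: if_splits)
        moreover have "0 \<le> Del x" by (simp add: Del_def)
        ultimately show "norm (Del x) \<le> norm (D x powr q + 1)" by simp
      qed
    qed measurable
    define ev where "ev = (\<lambda>t. {\<omega> \<in> space M. \<bar>U \<omega> - \<pi> (Y \<omega>)\<bar> < t})"
    have evm: "ev t \<in> sets M" for t unfolding ev_def by measurable
    have bnd: "(\<integral>\<omega>. Del \<omega> \<partial>M) \<le> t powr (p-q) * CD * w powr (-q/2) + \<rho> * t powr (p+1)"
      if t: "0 < t" "t < \<delta>" for t
    proof -
      have ind: "(if \<bar>U \<omega> - \<pi> (Y \<omega>)\<bar> < t then t powr p else 0) = t powr p * indicator (ev t) \<omega>"
        if "\<omega> \<in> space M" for \<omega> using that by (simp add: ev_def indicator_def)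
      have ii: "integrable M (\<lambda>\<omega>. t powr p * indicator (ev t) \<omega> :: real)"
        using evm by (intro integrable_mult_right integrable_real_indicator) (auto simp: less_top[symmetric])
      have "(\<integral>\<omega>. Del \<omega> \<partial>M) \<le> (\<integral>\<omega>. t powr (p-q) * D \<omega> powr q + t powr p * indicator (ev t) \<omega> \<partial>M)"
      proof (rule integral_mono)
        show "integrable M (\<lambda>\<omega>. t powr (p-q) * D \<omega> powr q + t powr p * indicator (ev t) \<omega>)"
          using Dqi ii by auto
        show "Del \<omega> \<le> t powr (p-q) * D \<omega> powr q + t powr p * indicator (ev t) \<omega>" if "\<omega> \<in> space M" for \<omega>
          using pw[OF t(1), of \<omega>] ind[OF that] by simp
      qed (rule Deli)
      also have "\<dots> = t powr (p-q) * (\<integral>\<omega>. D \<omega> powr q \<partial>M) + t powr p * measure M (ev t)"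
        using Dqi ii evm by (simp add: Int_absorb2 sets.sets_into_space)
      also have "\<dots> \<le> t powr (p-q) * (CD * w powr (-q/2)) + t powr p * (\<rho> * t)"
      proof (intro add_mono mult_left_mono)
        show "(\<integral>\<omega>. D \<omega> powr q \<partial>M) \<le> CD * w powr (-q/2)" by (rule DqB)
        show "measure M (ev t) \<le> \<rho> * t" unfolding ev_def U_def using hyp t \<delta> by auto
      qed auto
      also have "\<dots> = t powr (p-q) * CD * w powr (-q/2) + \<rho> * t powr (p+1)"
        using t by (simp add: powr_add algebra_simps)
      finally show ?thesis .
    qed
    have V: "(\<integral>\<omega>. Del \<omega> \<partial>M) \<le> b1 * 2 powr (-(q * (1 + 1/p) * p * real l / (2 * (q + 1))))"
      unfolding b1_def by (rule final_arith[OF q p1 pq w2 l \<delta>(1,2) \<rho> CD bnd])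
    have "(\<integral>\<^sup>+\<omega>. ennreal (Del \<omega>) \<partial>M) = ennreal (\<integral>\<omega>. Del \<omega> \<partial>M)"
      by (rule nn_integral_eq_integral[OF Deli]) (simp add: Del_def)
    then show "(\<integral>\<^sup>+\<omega>. ennreal (\<bar>Delta_ant M0 l Xs (\<lambda>\<omega>. \<pi> (Y \<omega>)) \<omega>\<bar> powr p) \<partial>M)
                \<le> ennreal (b1 * 2 powr (- (q * (1 + 1 / p) * p * real l / (2 * (q + 1)))))"
      using V unfolding Del_def by (simp add: ennreal_leI)
  qed
qed

end
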